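(* Let $k$ be a field, $\mathsf{E}$ a locally finite $k$-linear category, and $\mathfrak{P}$ a nonzero left $\mathcal{C}_\mathsf{E}$-contramodule. Then the left $\mathsf{E}$-module $\Theta_\mathsf{E}(\mathfrak{P})$ has a proper big $\mathsf{E}$-submodule.
   Context: A small $k$-linear category $\mathsf{E}$ has $k$-vector spaces $\operatorname{Hom}_\mathsf{E}(x,y)$, $k$-bilinear associative composition and identities with $\mathrm{id}_x\ne0$. A left $\mathsf{E}$-module is a $k$-linear functor $\mathsf{E}\to k\text{-Vect}$. Write $x\preceq y$ if there are $n\ge1$ and objects $x=z_0,\dots,z_n=y$ with $\operatorname{Hom}_\mathsf{E}(z_{i-1},z_i)\neq0$ for all $i$. $\mathsf{E}$ is locally finite if all Hom spaces are finite-dimensional and every $\{z:x\preceq z\preceq y\}$ is finite. A left $\mathsf{E}$-module $T$ is contrafinite if for every object $y$ there is a finite set of objects $A$ such that the action map $\operatorname{Hom}_\mathsf{E}(x,y)\otimes_kT(x)\to T(y)$ vanishes for all $x\notin A$; a submodule $Q\subseteq P$ is big if $P/Q$ is contrafinite. $\mathcal{C}_\mathsf{E}=\bigoplus_{x,y}\mathcal{C}^{x,y}$, $\mathcal{C}^{x,y}=\operatorname{Hom}_\mathsf{E}(x,y)^*$; counit zero on $\mathcal{C}^{x,y}$ for $x\ne y$, evaluation at $\mathrm{id}_x$ on $\mathcal{C}^{x,x}$; comultiplication $\mathcal{C}^{x,y}\to\bigoplus_z\mathcal{C}^{x,z}\otimes\mathcal{C}^{z,y}$ dual to composition $g\otimes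 h\mapsto hg$. A left contramodule over a coalgebra $(\mathcal{C},\mu,\epsilon)$ is a space $\mathfrak{P}$ with $\pi:\operatorname{Hom}_k(\mathcal{C},\mathfrak{P})\to\mathfrak{P}$ such that $\pi(c\mapsto\epsilon(c)p)=p$ and, under $\operatorname{Hom}_k(\mathcal{C},\operatorname{Hom}_k(\mathcal{C},\mathfrak{P}))\cong\operatorname{Hom}_k(\mathcal{C}\otimes\mathcal{C},\mathfrak{P})$, $f\mapsto(c'\otimes c''\mapsto f(c'')(c'))$, $\pi(c\mapsto\pi(f(c)))=\pi(f\circ\mu)$. Set $\varphi\cdot p=\pi(c\mapsto\varphi(c)p)$. With $e_x$ evaluation at $\mathrm{id}_x$ on $\mathcal{C}^{x,x}$ (zero elsewhere) and $\mathrm{ev}_f$, for $f\in\operatorname{Hom}_\mathsf{E}(x,y)$, evaluation at $f$ on $\mathcal{C}^{x,y}$ (zero elsewhere): $\Theta_\mathsf{E}(\mathfrak{P})(x)=e_x\cdot\mathfrak{P}$ (with $\mathfrak{P}\cong\prod_xe_x\cdot\mathfrak{P}$), $f$ acting by $p\mapsto\mathrm{ev}_f\cdot p$. *)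

theory Defs
  imports Complex_Main
begin

text \<open>
All Hom spaces live inside one
ambient k-vector space 'm (scalar multiplication sM); Hom x y is a subspace of 'm.
Composition cmp x y z h g is h o g for g in Hom x y, h in Hom y z; idn x is the identity.
\<close>

definition klinear_category ::
  "('k::field \<Rightarrow> 'm::ab_group_add \<Rightarrow> 'm) \<Rightarrow> ('o \<Rightarrow> 'o \<Rightarrow> 'm set)
   \<Rightarrow> ('o \<Rightarrow> 'o \<Rightarrow> 'o \<Rightarrow> 'm \<Rightarrow> 'm \<Rightarrow> 'm) \<Rightarrow> ('o \<Rightarrow> 'm) \<Rightarrow> bool" where
  "klinear_category sM Hom cmp idn \<longleftrightarrow>
     vector_space sM \<and>
     (\<forall>x y. module.subspace sM (Hom x y)) \<and>
     (\<forall>x y z g h. g \<in> Hom x y \<longrightarrow> h \<in> Hom y z \<longrightarrow> cmp x y z h g \<in> Hom x z) \<and>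
     (\<forall>x y z g h h'. g \<in> Hom x y \<longrightarrow> h \<in> Hom y z \<longrightarrow> h' \<in> Hom y z \<longrightarrow>
        cmp x y z (h + h') g = cmp x y z h g + cmp x y z h' g) \<and>
     (\<forall>x y z g g' h. g \<in> Hom x y \<longrightarrow> g' \<in> Hom x y \<longrightarrow> h \<in> Hom y z \<longrightarrow>
        cmp x y z h (g + g') = cmp x y z h g + cmp x y z h g') \<and>
     (\<forall>x y z g h c. g \<in> Hom x y \<longrightarrow> h \<in> Hom y z \<longrightarrow>
        cmp x y z (sM c h) g = sM c (cmp x y z h g) \<and>
        cmp x y z h (sM c g) = sM c (cmp x y z h g)) \<and>
     (\<forall>x y z w g h l. g \<in> Hom x y \<longrightarrow> h \<in> Hom y z \<longrightarrow> l \<in> Hom z w \<longrightarrow>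
        cmp x z w l (cmp x y z h g) = cmp x y w (cmp y z w l h) g) \<and>
     (\<forall>x. idn x \<in> Hom x x \<and> idn x \<noteq> 0) \<and>
     (\<forall>x y g. g \<in> Hom x y \<longrightarrow> cmp x x y g (idn x) = g \<and> cmp x y y (idn y) g = g)"

definition prec :: "('o \<Rightarrow> 'o \<Rightarrow> 'm::zero set) \<Rightarrow> 'o \<Rightarrow> 'o \<Rightarrow> bool" where
  "prec Hom x y \<longleftrightarrow> (x, y) \<in> {(a, b). Hom a b \<noteq> {0}}\<^sup>+"

definition locally_finite ::
  "('k::field \<Rightarrow> 'm::ab_group_add \<Rightarrow> 'm) \<Rightarrow> ('o \<Rightarrow> 'o \<Rightarrow> 'm set) \<Rightarrow> bool" where
  "locally_finite sM Hom \<longleftrightarrow>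
     (\<forall>x y. \<exists>B. finite B \<and> B \<subseteq> Hom x y \<and> module.span sM B = Hom x y) \<and>
     (\<forall>x y. finite {z. prec Hom x z \<and> prec Hom z y})"

text \<open>C^{x,y} = Hom(x,y)^*: linear functionals on Hom x y (extensional: zero off Hom x y).\<close>
definition dualsp ::
  "('k::field \<Rightarrow> 'm::ab_group_add \<Rightarrow> 'm) \<Rightarrow> ('o \<Rightarrow> 'o \<Rightarrow> 'm set) \<Rightarrow> 'o \<Rightarrow> 'o \<Rightarrow> ('m \<Rightarrow> 'k) set" where
  "dualsp sM Hom x y = {\<phi>.
     (\<forall>g\<in>Hom x y. \<forall>h\<in>Hom x y. \<phi> (g + h) = \<phi> g + \<phi> h) \<and>
     (\<forall>c. \<forall>g\<in>Hom x y. \<phi> (sM c g) = c * \<phi> g) \<and>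
     (\<forall>g. g \<notin> Hom x y \<longrightarrow> \<phi> g = 0)}"

text \<open>Hom_k(C_E, P): since C_E = \<Oplus>_{x,y} C^{x,y}, a linear map C_E \<rightarrow> P is a family of
linear maps C^{x,y} \<rightarrow> P (extensional: zero off C^{x,y}).\<close>
definition homCP ::
  "('k::field \<Rightarrow> 'm::ab_group_add \<Rightarrow> 'm) \<Rightarrow> ('o \<Rightarrow> 'o \<Rightarrow> 'm set) \<Rightarrow> ('k \<Rightarrow> 'p::ab_group_add \<Rightarrow> 'p)
   \<Rightarrow> ('o \<Rightarrow> 'o \<Rightarrow> ('m \<Rightarrow> 'k) \<Rightarrow> 'p) set" where
  "homCP sM Hom sP = {F. \<forall>x y.
     (\<forall>\<phi>\<in>dualsp sM Hom x y. \<forall>\<psi>\<in>dualsp sM Hom x y. F x y (\<lambda>g. \<phi> g + \<psi> g) = F x y \<phi> + F x y \<psi>) \<and>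
     (\<forall>c. \<forall>\<phi>\<in>dualsp sM Hom x y. F x y (\<lambda>g. c * \<phi> g) = sP c (F x y \<phi>)) \<and>
     (\<forall>\<phi>. \<phi> \<notin> dualsp sM Hom x y \<longrightarrow> F x y \<phi> = 0)}"

text \<open>Hom_k(C_E, Hom_k(C_E, P)), as families of linear maps C^{x,y} \<rightarrow> Hom_k(C_E,P).\<close>
definition homCHomCP ::
  "('k::field \<Rightarrow> 'm::ab_group_add \<Rightarrow> 'm) \<Rightarrow> ('o \<Rightarrow> 'o \<Rightarrow> 'm set) \<Rightarrow> ('k \<Rightarrow> 'p::ab_group_add \<Rightarrow> 'p)
   \<Rightarrow> ('o \<Rightarrow> 'o \<Rightarrow> ('m \<Rightarrow> 'k) \<Rightarrow> ('o \<Rightarrow> 'o \<Rightarrow> ('m \<Rightarrow> 'k) \<Rightarrow> 'p)) set" where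
  "homCHomCP sM Hom sP = {f. \<forall>x y.
     (\<forall>\<phi>. f x y \<phi> \<in> homCP sM Hom sP) \<and>
     (\<forall>\<phi>\<in>dualsp sM Hom x y. \<forall>\<psi>\<in>dualsp sM Hom x y.
        f x y (\<lambda>g. \<phi> g + \<psi> g) = (\<lambda>a b \<chi>. f x y \<phi> a b \<chi> + f x y \<psi> a b \<chi>)) \<and>
     (\<forall>c. \<forall>\<phi>\<in>dualsp sM Hom x y. f x y (\<lambda>g. c * \<phi> g) = (\<lambda>a b \<chi>. sP c (f x y \<phi> a b \<chi>))) \<and>
     (\<forall>\<phi>. \<phi> \<notin> dualsp sM Hom x y \<longrightarrow> f x y \<phi> = (\<lambda>a b \<chi>. 0))}"

text \<open>R = [(z_k, \<phi>'_k, \<phi>''_k)] represents the comultiplication of \<phi> \<in> C^{x,y}: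
  \<mu>(\<phi>) = \<Sum>_k \<phi>'_k \<otimes> \<phi>''_k in \<Oplus>_z C^{x,z} \<otimes> C^{z,y}, i.e. it is dual to composition
  g \<otimes> h \<mapsto> h g (an element of C^{x,z} \<otimes> C^{z,y} is determined by its pairings with g \<otimes> h).\<close>
definition comult_rep ::
  "('k::field \<Rightarrow> 'm::ab_group_add \<Rightarrow> 'm) \<Rightarrow> ('o \<Rightarrow> 'o \<Rightarrow> 'm set) \<Rightarrow> ('o \<Rightarrow> 'o \<Rightarrow> 'o \<Rightarrow> 'm \<Rightarrow> 'm \<Rightarrow> 'm)
   \<Rightarrow> 'o \<Rightarrow> 'o \<Rightarrow> ('m \<Rightarrow> 'k) \<Rightarrow> ('o \<times> ('m \<Rightarrow> 'k) \<times> ('m \<Rightarrow> 'k)) list \<Rightarrow> bool" where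
  "comult_rep sM Hom cmp x y \<phi> R \<longleftrightarrow>
     (\<forall>(z, \<phi>1, \<phi>2) \<in> set R. \<phi>1 \<in> dualsp sM Hom x z \<and> \<phi>2 \<in> dualsp sM Hom z y) \<and>
     (\<forall>z g h. g \<in> Hom x z \<longrightarrow> h \<in> Hom z y \<longrightarrow>
        \<phi> (cmp x z y h g) = (\<Sum>(z', \<phi>1, \<phi>2) \<leftarrow> R. if z' = z then \<phi>1 g * \<phi>2 h else 0))"

definition contramodule ::
  "('k::field \<Rightarrow> 'm::ab_group_add \<Rightarrow> 'm) \<Rightarrow> ('o \<Rightarrow> 'o \<Rightarrow> 'm set) \<Rightarrow> ('o \<Rightarrow> 'o \<Rightarrow> 'o \<Rightarrow> 'm \<Rightarrow> 'm \<Rightarrow> 'm)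
   \<Rightarrow> ('o \<Rightarrow> 'm) \<Rightarrow> ('k \<Rightarrow> 'p::ab_group_add \<Rightarrow> 'p) \<Rightarrow> (('o \<Rightarrow> 'o \<Rightarrow> ('m \<Rightarrow> 'k) \<Rightarrow> 'p) \<Rightarrow> 'p) \<Rightarrow> bool" where
  "contramodule sM Hom cmp idn sP \<pi> \<longleftrightarrow>
     vector_space sP \<and>
     (\<forall>F\<in>homCP sM Hom sP. \<forall>G\<in>homCP sM Hom sP. \<pi> (\<lambda>x y \<phi>. F x y \<phi> + G x y \<phi>) = \<pi> F + \<pi> G) \<and>
     (\<forall>c. \<forall>F\<in>homCP sM Hom sP. \<pi> (\<lambda>x y \<phi>. sP c (F x y \<phi>)) = sP c (\<pi> F)) \<and>
     \<comment> \<open>counit axiom: \<pi>(c \<mapsto> \<epsilon>(c) p) = p\<close>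
     (\<forall>p. \<pi> (\<lambda>x y \<phi>. if \<phi> \<in> dualsp sM Hom x y \<and> x = y then sP (\<phi> (idn x)) p else 0) = p) \<and>
     \<comment> \<open>contraassociativity: \<pi>(c \<mapsto> \<pi>(f(c))) = \<pi>(f \<circ> \<mu>), where f is viewed as the map
        c' \<otimes> c'' \<mapsto> f(c'')(c') on C \<otimes> C and G below is f \<circ> \<mu>\<close>
     (\<forall>f\<in>homCHomCP sM Hom sP. \<forall>G.
        (\<forall>x y \<phi>. \<phi> \<in> dualsp sM Hom x y \<longrightarrow> (\<forall>R. comult_rep sM Hom cmp x y \<phi> R \<longrightarrow>
            G x y \<phi> = (\<Sum>(z, \<phi>1, \<phi>2) \<leftarrow> R. f z y \<phi>2 x z \<phi>1))) \<and>
        (\<forall>x y \<phi>. \<phi> \<notin> dualsp sM Hom x y \<longrightarrow> G x y \<phi> = 0)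
        \<longrightarrow> \<pi> (\<lambda>x y \<phi>. \<pi> (f x y \<phi>)) = \<pi> G)"

text \<open>\<Phi> \<cdot> p = \<pi>(c \<mapsto> \<Phi>(c) p) for \<Phi> \<in> C_E^*, given by its restrictions to the C^{x,y}.\<close>
definition cact ::
  "('k::field \<Rightarrow> 'm::ab_group_add \<Rightarrow> 'm) \<Rightarrow> ('o \<Rightarrow> 'o \<Rightarrow> 'm set) \<Rightarrow> ('k \<Rightarrow> 'p::ab_group_add \<Rightarrow> 'p)
   \<Rightarrow> (('o \<Rightarrow> 'o \<Rightarrow> ('m \<Rightarrow> 'k) \<Rightarrow> 'p) \<Rightarrow> 'p) \<Rightarrow> ('o \<Rightarrow> 'o \<Rightarrow> ('m \<Rightarrow> 'k) \<Rightarrow> 'k) \<Rightarrow> 'p \<Rightarrow> 'p" where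
  "cact sM Hom sP \<pi> \<Phi> p = \<pi> (\<lambda>x y \<phi>. if \<phi> \<in> dualsp sM Hom x y then sP (\<Phi> x y \<phi>) p else 0)"

definition unit_el :: "('o \<Rightarrow> 'm) \<Rightarrow> 'o \<Rightarrow> ('o \<Rightarrow> 'o \<Rightarrow> ('m \<Rightarrow> 'k) \<Rightarrow> 'k::zero)" where
  "unit_el idn x = (\<lambda>a b \<phi>. if a = x \<and> b = x then \<phi> (idn x) else 0)"

definition ev_el :: "'o \<Rightarrow> 'o \<Rightarrow> 'm \<Rightarrow> ('o \<Rightarrow> 'o \<Rightarrow> ('m \<Rightarrow> 'k) \<Rightarrow> 'k::zero)" where
  "ev_el x y f = (\<lambda>a b \<phi>. if a = x \<and> b = y then \<phi> f else 0)"

text \<open>\<Theta>_E(P): underlying spaces \<Theta>(x) = e_x \<cdot> P and action of f \<in> Hom(x,y) by p \<mapsto> ev_f \<cdot> p.\<close>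
definition Theta_sp ::
  "('k::field \<Rightarrow> 'm::ab_group_add \<Rightarrow> 'm) \<Rightarrow> ('o \<Rightarrow> 'o \<Rightarrow> 'm set) \<Rightarrow> ('o \<Rightarrow> 'm) \<Rightarrow> ('k \<Rightarrow> 'p::ab_group_add \<Rightarrow> 'p)
   \<Rightarrow> (('o \<Rightarrow> 'o \<Rightarrow> ('m \<Rightarrow> 'k) \<Rightarrow> 'p) \<Rightarrow> 'p) \<Rightarrow> 'o \<Rightarrow> 'p set" where
  "Theta_sp sM Hom idn sP \<pi> x = range (cact sM Hom sP \<pi> (unit_el idn x))"

definition Theta_act ::
  "('k::field \<Rightarrow> 'm::ab_group_add \<Rightarrow> 'm) \<Rightarrow> ('o \<Rightarrow> 'o \<Rightarrow> 'm set) \<Rightarrow> ('k \<Rightarrow> 'p::ab_group_add \<Rightarrow> 'p)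
   \<Rightarrow> (('o \<Rightarrow> 'o \<Rightarrow> ('m \<Rightarrow> 'k) \<Rightarrow> 'p) \<Rightarrow> 'p) \<Rightarrow> 'o \<Rightarrow> 'o \<Rightarrow> 'm \<Rightarrow> 'p \<Rightarrow> 'p" where
  "Theta_act sM Hom sP \<pi> x y f = cact sM Hom sP \<pi> (ev_el x y f)"

text \<open>Submodules of a left E-module (T, \<rho>) with T x \<subseteq> 'p and \<rho> x y f : T x \<rightarrow> T y.\<close>
definition submodule ::
  "('o \<Rightarrow> 'o \<Rightarrow> 'm set) \<Rightarrow> ('k::field \<Rightarrow> 'p::ab_group_add \<Rightarrow> 'p) \<Rightarrow> ('o \<Rightarrow> 'p set)
   \<Rightarrow> ('o \<Rightarrow> 'o \<Rightarrow> 'm \<Rightarrow> 'p \<Rightarrow> 'p) \<Rightarrow> ('o \<Rightarrow> 'p set) \<Rightarrow> bool" where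
  "submodule Hom sP T \<rho> Q \<longleftrightarrow>
     (\<forall>x. Q x \<subseteq> T x \<and> module.subspace sP (Q x)) \<and>
     (\<forall>x y f p. f \<in> Hom x y \<longrightarrow> p \<in> Q x \<longrightarrow> \<rho> x y f p \<in> Q y)"

text \<open>Q is big iff T/Q is contrafinite: for each y there is a finite A such that for x \<notin> A
the action map Hom(x,y) \<otimes> (T/Q)(x) \<rightarrow> (T/Q)(y) vanishes, i.e. \<rho> x y f p \<in> Q y.\<close>
definition big_submodule ::
  "('o \<Rightarrow> 'o \<Rightarrow> 'm set) \<Rightarrow> ('k::field \<Rightarrow> 'p::ab_group_add \<Rightarrow> 'p) \<Rightarrow> ('o \<Rightarrow> 'p set)
   \<Rightarrow> ('o \<Rightarrow> 'o \<Rightarrow> 'm \<Rightarrow> 'p \<Rightarrow> 'p) \<Rightarrow> ('o \<Rightarrow> 'p set) \<Rightarrow> bool" where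
  "big_submodule Hom sP T \<rho> Q \<longleftrightarrow>
     submodule Hom sP T \<rho> Q \<and>
     (\<forall>y. \<exists>A. finite A \<and> (\<forall>x. x \<notin> A \<longrightarrow> (\<forall>f\<in>Hom x y. \<forall>p\<in>T x. \<rho> x y f p \<in> Q y)))"

end

theory Submission
  imports Defs
begin



locale cs =
  fixes sM :: "'k::field \<Rightarrow> 'm::ab_group_add \<Rightarrow> 'm"
    and Hom :: "'o \<Rightarrow> 'o \<Rightarrow> 'm set"
    and cmp :: "'o \<Rightarrow> 'o \<Rightarrow> 'o \<Rightarrow> 'm \<Rightarrow> 'm \<Rightarrow> 'm"
    and idn :: "'o \<Rightarrow> 'm"
    and sP :: "'k \<Rightarrow> 'p::ab_group_add \<Rightarrow> 'p"
    and \<pi> :: "('o \<Rightarrow> 'o \<Rightarrow> ('m \<Rightarrow> 'k) \<Rightarrow> 'p) \<Rightarrow> 'p"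
  assumes KC: "klinear_category sM Hom cmp idn"
    and LF: "locally_finite sM Hom"
    and CM: "contramodule sM Hom cmp idn sP \<pi>"

sublocale cs \<subseteq> M: vector_space sM
  using KC unfolding klinear_category_def by auto

sublocale cs \<subseteq> P: vector_space sP
  using CM unfolding contramodule_def by auto

context cs begin

abbreviation D where "D \<equiv> dualsp sM Hom"
abbreviation HC where "HC \<equiv> homCP sM Hom sP"
abbreviation HH where "HH \<equiv> homCHomCP sM Hom sP"

lemma Hom_sub: "M.subspace (Hom x y)"
  using KC unfolding klinear_category_def by auto
lemma Hom0[simp]: "0 \<in> Hom x y"
  using Hom_sub M.subspace_0 by blast
lemma Hom_add: "g \<in> Hom x y \<Longrightarrow> h \<in> Hom x y \<Longrightarrow> g + h \<in> Hom x y"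
  using Hom_sub M.subspace_add by blast
lemma Hom_scale: "g \<in> Hom x y \<Longrightarrow> sM c g \<in> Hom x y"
  using Hom_sub M.subspace_scale by blast
lemma Hom_sum: "(\<And>i. i \<in> I \<Longrightarrow> v i \<in> Hom x y) \<Longrightarrow> sum v I \<in> Hom x y"
  using Hom_sub M.subspace_sum by blast
lemma cmp_in: "g \<in> Hom x y \<Longrightarrow> h \<in> Hom y z \<Longrightarrow> cmp x y z h g \<in> Hom x z"
  using KC unfolding klinear_category_def by simp
lemma cmp_addL: "g \<in> Hom x y \<Longrightarrow> h \<in> Hom y z \<Longrightarrow> h' \<in> Hom y z \<Longrightarrow>
        cmp x y z (h + h') g = cmp x y z h g + cmp x y z h' g"
  using KC unfolding klinear_category_def by simp
lemma cmp_addR: "g \<in> Hom x y \<Longrightarrow> g' \<in> Hom x y \<Longrightarrow> h \<in> Hom y z \<Longrightarrow>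
        cmp x y z h (g + g') = cmp x y z h g + cmp x y z h g'"
  using KC unfolding klinear_category_def by simp
lemma cmp_scaleL: "g \<in> Hom x y \<Longrightarrow> h \<in> Hom y z \<Longrightarrow> cmp x y z (sM c h) g = sM c (cmp x y z h g)"
  using KC unfolding klinear_category_def by simp
lemma cmp_scaleR: "g \<in> Hom x y \<Longrightarrow> h \<in> Hom y z \<Longrightarrow> cmp x y z h (sM c g) = sM c (cmp x y z h g)"
  using KC unfolding klinear_category_def by simp
lemma idn_in: "idn x \<in> Hom x x"
  using KC unfolding klinear_category_def by simp
lemma cmp_idL: "g \<in> Hom x y \<Longrightarrow> cmp x y y (idn y) g = g"
  using KC unfolding klinear_category_def by simp
lemma cmp_0L: "g \<in> Hom x y \<Longrightarrow> cmp x y z 0 g = 0"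
  using cmp_addL[of g x y 0 z 0] by simp
lemma cmp_0R: "h \<in> Hom y z \<Longrightarrow> cmp x y z h 0 = 0"
  using cmp_addR[of 0 x y 0 h z] by simp

lemma pi_add: "F \<in> HC \<Longrightarrow> G \<in> HC \<Longrightarrow> \<pi> (\<lambda>x y \<phi>. F x y \<phi> + G x y \<phi>) = \<pi> F + \<pi> G"
  using CM unfolding contramodule_def by simp
lemma pi_scale: "F \<in> HC \<Longrightarrow> \<pi> (\<lambda>x y \<phi>. sP c (F x y \<phi>)) = sP c (\<pi> F)"
  using CM unfolding contramodule_def by simp
lemma counit: "\<pi> (\<lambda>x y \<phi>. if \<phi> \<in> D x y \<and> x = y then sP (\<phi> (idn x)) p else 0) = p"
  using CM unfolding contramodule_def by simp
lemma contra: "f \<in> HH \<Longrightarrow>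
        (\<And>x y \<phi> R. \<phi> \<in> D x y \<Longrightarrow> comult_rep sM Hom cmp x y \<phi> R \<Longrightarrow>
            G x y \<phi> = (\<Sum>(z, \<phi>1, \<phi>2) \<leftarrow> R. f z y \<phi>2 x z \<phi>1)) \<Longrightarrow>
        (\<And>x y \<phi>. \<phi> \<notin> D x y \<Longrightarrow> G x y \<phi> = 0)
        \<Longrightarrow> \<pi> (\<lambda>x y \<phi>. \<pi> (f x y \<phi>)) = \<pi> G"
  using CM unfolding contramodule_def by simp

lemma prec_trans: "prec Hom x y \<Longrightarrow> prec Hom y z \<Longrightarrow> prec Hom x z"
  unfolding prec_def by (meson trancl_trans)
lemma prec_hom: "g \<in> Hom x y \<Longrightarrow> g \<noteq> 0 \<Longrightarrow> prec Hom x y"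
  unfolding prec_def by (rule r_into_trancl) auto
lemma prec_hom': "Hom x y \<noteq> {0} \<Longrightarrow> prec Hom x y"
  unfolding prec_def by (rule r_into_trancl) auto

lemma D_add: "\<phi> \<in> D x y \<Longrightarrow> g \<in> Hom x y \<Longrightarrow> h \<in> Hom x y \<Longrightarrow> \<phi> (g + h) = \<phi> g + \<phi> h"
  unfolding dualsp_def by blast
lemma D_scale: "\<phi> \<in> D x y \<Longrightarrow> g \<in> Hom x y \<Longrightarrow> \<phi> (sM c g) = c * \<phi> g"
  unfolding dualsp_def by blast
lemma D_out: "\<phi> \<in> D x y \<Longrightarrow> g \<notin> Hom x y \<Longrightarrow> \<phi> g = 0"
  unfolding dualsp_def by blast
lemma D_at0: "\<phi> \<in> D x y \<Longrightarrow> \<phi> 0 = 0"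
  using D_scale[of \<phi> x y 0 0] by simp
lemma D_zero[simp]: "(\<lambda>g. 0) \<in> D x y"
  unfolding dualsp_def by auto
lemma D_plus: "\<phi> \<in> D x y \<Longrightarrow> \<psi> \<in> D x y \<Longrightarrow> (\<lambda>g. \<phi> g + \<psi> g) \<in> D x y"
  unfolding dualsp_def by (auto simp: algebra_simps)
lemma D_smult: "\<phi> \<in> D x y \<Longrightarrow> (\<lambda>g. c * \<phi> g) \<in> D x y"
  unfolding dualsp_def by (auto simp: algebra_simps)
lemma D_sum: "(\<And>i. i \<in> I \<Longrightarrow> c i \<in> D x y) \<Longrightarrow> (\<lambda>g. \<Sum>i\<in>I. c i g) \<in> D x y"
proof (induction I rule: infinite_finite_induct)
  case (insert i I)
  then show ?case using D_plus[of "c i" x y "\<lambda>g. \<Sum>i\<in>I. c i g"] by auto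
qed auto
lemma D_list: "(\<And>r. r \<in> set R \<Longrightarrow> c r \<in> D x y) \<Longrightarrow> (\<lambda>g. \<Sum>r\<leftarrow>R. c r g) \<in> D x y"
proof (induction R)
  case (Cons r R)
  then show ?case using D_plus[of "c r" x y "\<lambda>g. \<Sum>r\<leftarrow>R. c r g"] by auto
qed auto
lemma D_vsum: "\<phi> \<in> D x y \<Longrightarrow> (\<And>i. i \<in> I \<Longrightarrow> v i \<in> Hom x y) \<Longrightarrow> \<phi> (sum v I) = (\<Sum>i\<in>I. \<phi> (v i))"
proof (induction I rule: infinite_finite_induct)
  case (infinite A) then show ?case by (simp add: D_at0)
next
  case empty then show ?case by (simp add: D_at0)
next
  case (insert i I)
  then show ?case by (simp add: D_add Hom_sum)
qed

lemma HC_add: "F \<in> HC \<Longrightarrow> \<phi> \<in> D x y \<Longrightarrow> \<psi> \<in> D x y \<Longrightarrow> F x y (\<lambda>g. \<phi> g + \<psi> g) = F x y \<phi> + F x y \<psi>"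
  unfolding homCP_def by blast
lemma HC_scale: "F \<in> HC \<Longrightarrow> \<phi> \<in> D x y \<Longrightarrow> F x y (\<lambda>g. c * \<phi> g) = sP c (F x y \<phi>)"
  unfolding homCP_def by blast
lemma HC_out: "F \<in> HC \<Longrightarrow> \<phi> \<notin> D x y \<Longrightarrow> F x y \<phi> = 0"
  unfolding homCP_def by blast
lemma HC_zero: "F \<in> HC \<Longrightarrow> F x y (\<lambda>g. 0) = 0"
  using HC_scale[of F "\<lambda>g. 0" x y 0] by simp
lemma HC_sum: "F \<in> HC \<Longrightarrow> (\<And>i. i \<in> I \<Longrightarrow> c i \<in> D x y) \<Longrightarrow>
   F x y (\<lambda>g. \<Sum>i\<in>I. c i g) = (\<Sum>i\<in>I. F x y (c i))"
proof (induction I rule: infinite_finite_induct)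
  case (insert i I)
  then show ?case using HC_add[of F "c i" x y "\<lambda>g. \<Sum>i\<in>I. c i g"] D_sum[of I c x y] by auto
qed (auto simp: HC_zero)
lemma HC_list: "F \<in> HC \<Longrightarrow> (\<And>r. r \<in> set R \<Longrightarrow> c r \<in> D x y) \<Longrightarrow>
   F x y (\<lambda>g. \<Sum>r\<leftarrow>R. c r g) = (\<Sum>r\<leftarrow>R. F x y (c r))"
proof (induction R)
  case (Cons r R)
  then show ?case using HC_add[of F "c r" x y "\<lambda>g. \<Sum>r\<leftarrow>R. c r g"] D_list[of R c x y] by auto
qed (auto simp: HC_zero)

lemma HC_zerofun[simp]: "(\<lambda>x y \<phi>. 0) \<in> HC"
  unfolding homCP_def by auto
lemma HC_plus: "F \<in> HC \<Longrightarrow> G \<in> HC \<Longrightarrow> (\<lambda>x y \<phi>. F x y \<phi> + G x y \<phi>) \<in> HC"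
  unfolding homCP_def by (auto simp: algebra_simps P.scale_right_distrib)
lemma HC_diff: "F \<in> HC \<Longrightarrow> G \<in> HC \<Longrightarrow> (\<lambda>x y \<phi>. F x y \<phi> - G x y \<phi>) \<in> HC"
  unfolding homCP_def by (auto simp: algebra_simps P.scale_right_diff_distrib)
lemma HC_smult: "F \<in> HC \<Longrightarrow> (\<lambda>x y \<phi>. sP (c x y) (F x y \<phi>)) \<in> HC"
  unfolding homCP_def by (auto simp: algebra_simps P.scale_right_distrib mult.commute)
lemma HC_sumfun: "finite J \<Longrightarrow> (\<And>n. n \<in> J \<Longrightarrow> F n \<in> HC) \<Longrightarrow> (\<lambda>x y \<phi>. \<Sum>n\<in>J. F n x y \<phi>) \<in> HC"
proof (induction J rule: finite_induct)
  case (insert n J)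
  then show ?case using HC_plus[of "F n" "\<lambda>x y \<phi>. \<Sum>n\<in>J. F n x y \<phi>"] by auto
qed auto
lemma HC_sumfun': "(\<And>n. F n \<in> HC) \<Longrightarrow> (\<And>x y. finite (J x y)) \<Longrightarrow> (\<lambda>x y \<phi>. \<Sum>n\<in>J x y. F n x y \<phi>) \<in> HC"
proof -
  assume a: "\<And>n. F n \<in> HC" "\<And>x y. finite (J x y)"
  show ?thesis unfolding homCP_def
  proof (intro CollectI allI conjI ballI)
    fix x y \<phi> \<psi> assume "\<phi> \<in> D x y" "\<psi> \<in> D x y"
    then show "(\<Sum>n\<in>J x y. F n x y (\<lambda>g. \<phi> g + \<psi> g)) = (\<Sum>n\<in>J x y. F n x y \<phi>) + (\<Sum>n\<in>J x y. F n x y \<psi>)"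
      using a by (simp add: HC_add sum.distrib)
  next
    fix x y c \<phi> assume "\<phi> \<in> D x y"
    then show "(\<Sum>n\<in>J x y. F n x y (\<lambda>g. c * \<phi> g)) = sP c (\<Sum>n\<in>J x y. F n x y \<phi>)"
      using a by (simp add: HC_scale P.scale_sum_right)
  next
    fix x y \<phi> show "\<phi> \<notin> D x y \<longrightarrow> (\<Sum>n\<in>J x y. F n x y \<phi>) = 0"
      using a by (simp add: HC_out)
  qed
qed

lemma pi_zero: "\<pi> (\<lambda>x y \<phi>. 0) = 0"
  using pi_scale[of "\<lambda>x y \<phi>. 0" 0] by simp
lemma pi_diff: "F \<in> HC \<Longrightarrow> G \<in> HC \<Longrightarrow> \<pi> (\<lambda>x y \<phi>. F x y \<phi> - G x y \<phi>) = \<pi> F - \<pi> G"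
  using pi_add[of "\<lambda>x y \<phi>. F x y \<phi> - G x y \<phi>" G] HC_diff[of F G] by (simp add: eq_diff_eq)
lemma pi_sum: "finite J \<Longrightarrow> (\<And>n. n \<in> J \<Longrightarrow> F n \<in> HC) \<Longrightarrow> \<pi> (\<lambda>x y \<phi>. \<Sum>n\<in>J. F n x y \<phi>) = (\<Sum>n\<in>J. \<pi> (F n))"
proof (induction J rule: finite_induct)
  case empty then show ?case by (simp add: pi_zero)
next
  case (insert n J)
  then show ?case using pi_add[of "F n" "\<lambda>x y \<phi>. \<Sum>n\<in>J. F n x y \<phi>"] HC_sumfun[of J F] by auto
qed

end



context cs begin

definition mlin :: "('o \<Rightarrow> 'o \<Rightarrow> ('m \<Rightarrow> 'k) \<Rightarrow> 'k) \<Rightarrow> bool" where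
  "mlin \<Phi> \<longleftrightarrow> (\<forall>x y. (\<forall>\<phi>\<in>D x y. \<forall>\<psi>\<in>D x y. \<Phi> x y (\<lambda>g. \<phi> g + \<psi> g) = \<Phi> x y \<phi> + \<Phi> x y \<psi>) \<and>
     (\<forall>c. \<forall>\<phi>\<in>D x y. \<Phi> x y (\<lambda>g. c * \<phi> g) = c * \<Phi> x y \<phi>))"

lemma mlin_ev: "mlin (ev_el x0 y0 f)"
  unfolding mlin_def ev_el_def by auto
lemma mlin_unit: "mlin (unit_el idn x0)"
  unfolding mlin_def unit_el_def by auto
definition eps :: "'o \<Rightarrow> 'o \<Rightarrow> ('m \<Rightarrow> 'k) \<Rightarrow> 'k" where
  "eps = (\<lambda>a b \<phi>. if a = b then \<phi> (idn a) else 0)"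
lemma mlin_eps: "mlin eps"
  unfolding mlin_def eps_def by auto

definition cfun where
  "cfun \<Phi> p = (\<lambda>x y \<phi>. if \<phi> \<in> D x y then sP (\<Phi> x y \<phi>) p else 0)"

lemma cact_cfun: "cact sM Hom sP \<pi> \<Phi> p = \<pi> (cfun \<Phi> p)"
  unfolding cact_def cfun_def by simp

lemma cfun_HC: "mlin \<Phi> \<Longrightarrow> cfun \<Phi> p \<in> HC"
  unfolding homCP_def cfun_def mlin_def
  by (auto simp: D_plus D_smult P.scale_left_distrib)

lemma cact_add: "mlin \<Phi> \<Longrightarrow> cact sM Hom sP \<pi> \<Phi> (p + q) = cact sM Hom sP \<pi> \<Phi> p + cact sM Hom sP \<pi> \<Phi> q"
proof -
  assume m: "mlin \<Phi>"
  have "cfun \<Phi> (p + q) = (\<lambda>x y \<phi>. cfun \<Phi> p x y \<phi> + cfun \<Phi> q x y \<phi>)"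
    unfolding cfun_def by (intro ext) (auto simp: P.scale_right_distrib)
  then show ?thesis unfolding cact_cfun using pi_add[OF cfun_HC[OF m] cfun_HC[OF m]] by simp
qed

lemma cact_scale: "mlin \<Phi> \<Longrightarrow> cact sM Hom sP \<pi> \<Phi> (sP c p) = sP c (cact sM Hom sP \<pi> \<Phi> p)"
proof -
  assume m: "mlin \<Phi>"
  have "cfun \<Phi> (sP c p) = (\<lambda>x y \<phi>. sP c (cfun \<Phi> p x y \<phi>))"
    unfolding cfun_def by (intro ext) (auto simp: P.scale_left_commute)
  then show ?thesis unfolding cact_cfun using pi_scale[OF cfun_HC[OF m]] by simp
qed

lemma cact_zero: "mlin \<Phi> \<Longrightarrow> cact sM Hom sP \<pi> \<Phi> 0 = 0"
  using cact_scale[of \<Phi> 0 0] by simp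

definition fgen where
  "fgen \<Phi> H = (\<lambda>z y \<phi>2. if \<phi>2 \<in> D z y then (\<lambda>a b \<chi>. sP (\<Phi> z y \<phi>2) (H z y a b \<chi>)) else (\<lambda>a b \<chi>. 0))"

lemma fgen_HH: "mlin \<Phi> \<Longrightarrow> (\<And>z y. H z y \<in> HC) \<Longrightarrow> fgen \<Phi> H \<in> HH"
proof -
  assume m: "mlin \<Phi>" and h: "\<And>z y. H z y \<in> HC"
  show ?thesis unfolding homCHomCP_def
  proof (intro CollectI allI conjI ballI impI)
    fix x y \<phi> show "fgen \<Phi> H x y \<phi> \<in> HC"
      unfolding fgen_def using HC_smult[OF h, of "\<lambda>_ _. \<Phi> x y \<phi>"] by auto
  next
    fix x y \<phi> \<psi> assume a: "\<phi> \<in> D x y" "\<psi> \<in> D x y"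
    then show "fgen \<Phi> H x y (\<lambda>g. \<phi> g + \<psi> g) = (\<lambda>a b \<chi>. fgen \<Phi> H x y \<phi> a b \<chi> + fgen \<Phi> H x y \<psi> a b \<chi>)"
      using m unfolding fgen_def mlin_def by (auto simp: D_plus P.scale_left_distrib)
  next
    fix x y c \<phi> assume a: "\<phi> \<in> D x y"
    then show "fgen \<Phi> H x y (\<lambda>g. c * \<phi> g) = (\<lambda>a b \<chi>. sP c (fgen \<Phi> H x y \<phi> a b \<chi>))"
      using m unfolding fgen_def mlin_def by (auto simp: D_smult)
  next
    fix x y \<phi> assume "\<phi> \<notin> D x y"
    then show "fgen \<Phi> H x y \<phi> = (\<lambda>a b \<chi>. 0)" unfolding fgen_def by auto
  qed
qed

lemma fgen_pi: "(\<And>z y. H z y \<in> HC) \<Longrightarrow>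
  \<pi> (fgen \<Phi> H z y \<phi>) = (if \<phi> \<in> D z y then sP (\<Phi> z y \<phi>) (\<pi> (H z y)) else 0)"
  unfolding fgen_def using pi_scale pi_zero by auto

lemma fgen_pi_fun: "(\<And>z y. H z y \<in> HC) \<Longrightarrow>
  (\<lambda>x y \<phi>. \<pi> (fgen \<Phi> H x y \<phi>)) = (\<lambda>x y \<phi>. if \<phi> \<in> D x y then sP (\<Phi> x y \<phi>) (\<pi> (H x y)) else 0)"
  using fgen_pi by blast

lemma CR1: "comult_rep sM Hom cmp x y \<phi> R \<Longrightarrow> (z, \<phi>1, \<phi>2) \<in> set R \<Longrightarrow> \<phi>1 \<in> D x z \<and> \<phi>2 \<in> D z y"
  unfolding comult_rep_def by fastforce
lemma CR2: "comult_rep sM Hom cmp x y \<phi> R \<Longrightarrow> g \<in> Hom x z \<Longrightarrow> h \<in> Hom z y \<Longrightarrow>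
   \<phi> (cmp x z y h g) = (\<Sum>(z', \<phi>1, \<phi>2) \<leftarrow> R. if z' = z then \<phi>1 g * \<phi>2 h else 0)"
  unfolding comult_rep_def by blast

lemma psiR_D: "\<phi> \<in> D x y \<Longrightarrow> h \<in> Hom z y \<Longrightarrow> (\<lambda>g. if g \<in> Hom x z then \<phi> (cmp x z y h g) else 0) \<in> D x z"
  unfolding dualsp_def
  by (auto simp: cmp_addR cmp_scaleR cmp_in Hom_add Hom_scale D_add D_scale)

lemma Rsum_ev:
  assumes F: "F \<in> HC" and phi: "\<phi> \<in> D x y" and R: "comult_rep sM Hom cmp x y \<phi> R" and h: "h \<in> Hom z0 y"
  shows "(\<Sum>(z, \<phi>1, \<phi>2) \<leftarrow> R. if z = z0 then sP (\<phi>2 h) (F x z \<phi>1) else 0)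
        = F x z0 (\<lambda>g. if g \<in> Hom x z0 then \<phi> (cmp x z0 y h g) else 0)"
proof -
  define c where "c = (\<lambda>r::'o \<times> ('m \<Rightarrow> 'k) \<times> ('m \<Rightarrow> 'k). \<lambda>g. case r of (z, \<phi>1, \<phi>2) \<Rightarrow> if z = z0 then \<phi>2 h * \<phi>1 g else 0)"
  have cD: "c r \<in> D x z0" if "r \<in> set R" for r
  proof -
    obtain z \<phi>1 \<phi>2 where r: "r = (z, \<phi>1, \<phi>2)" by (cases r) auto
    show ?thesis using CR1[OF R that[unfolded r]] D_smult[of \<phi>1 x z0 "\<phi>2 h"] unfolding c_def r by (cases "z = z0") auto
  qed
  have "map (\<lambda>(z, \<phi>1, \<phi>2). if z = z0 then sP (\<phi>2 h) (F x z \<phi>1) else 0) R = map (\<lambda>r. F x z0 (c r)) R"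
  proof (rule map_cong[OF refl])
    fix r assume r: "r \<in> set R"
    obtain z \<phi>1 \<phi>2 where rr: "r = (z, \<phi>1, \<phi>2)" by (cases r) auto
    show "(case r of (z, \<phi>1, \<phi>2) \<Rightarrow> if z = z0 then sP (\<phi>2 h) (F x z \<phi>1) else 0) = F x z0 (c r)"
      using CR1[OF R r[unfolded rr]] HC_scale[OF F, of \<phi>1 x z0 "\<phi>2 h"] HC_zero[OF F]
      unfolding rr c_def by auto
  qed
  then have "(\<Sum>(z, \<phi>1, \<phi>2) \<leftarrow> R. if z = z0 then sP (\<phi>2 h) (F x z \<phi>1) else 0) = (\<Sum>r\<leftarrow>R. F x z0 (c r))"
    by (rule arg_cong[where f=sum_list])
  also have "\<dots> = F x z0 (\<lambda>g. \<Sum>r\<leftarrow>R. c r g)"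
    using HC_list[OF F, of R c x z0] cD by simp
  also have "(\<lambda>g. \<Sum>r\<leftarrow>R. c r g) = (\<lambda>g. if g \<in> Hom x z0 then \<phi> (cmp x z0 y h g) else 0)"
  proof
    fix g show "(\<Sum>r\<leftarrow>R. c r g) = (if g \<in> Hom x z0 then \<phi> (cmp x z0 y h g) else 0)"
    proof (cases "g \<in> Hom x z0")
      case True
      have "map (\<lambda>r. c r g) R = map (\<lambda>(z', \<phi>1, \<phi>2). if z' = z0 then \<phi>1 g * \<phi>2 h else 0) R"
        unfolding c_def by (rule map_cong[OF refl]) (auto simp: mult.commute)
      then have "(\<Sum>r\<leftarrow>R. c r g) = (\<Sum>(z', \<phi>1, \<phi>2) \<leftarrow> R. if z' = z0 then \<phi>1 g * \<phi>2 h else 0)"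
        by (rule arg_cong[where f=sum_list])
      then show ?thesis using True CR2[OF R True h] by simp
    next
      case False
      have "map (\<lambda>r. c r g) R = map (\<lambda>r. 0) R"
      proof (rule map_cong[OF refl])
        fix r assume r: "r \<in> set R"
        obtain z \<phi>1 \<phi>2 where rr: "r = (z, \<phi>1, \<phi>2)" by (cases r) auto
        show "c r g = 0" using CR1[OF R r[unfolded rr]] False D_out unfolding c_def rr by auto
      qed
      then have "(\<Sum>r\<leftarrow>R. c r g) = (\<Sum>r\<leftarrow>R. 0)"
        by (rule arg_cong[where f=sum_list])
      then show ?thesis using False by simp
    qed
  qed
  finally show ?thesis .
qed

lemma restr_id: "\<phi> \<in> D x y \<Longrightarrow> (\<lambda>g. if g \<in> Hom x y then \<phi> (cmp x y y (idn y) g) else 0) = \<phi>"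
  by (auto simp: cmp_idL D_out)

end



context cs begin

lemma sumR_cong: "(\<And>z \<phi>1 \<phi>2. (z, \<phi>1, \<phi>2) \<in> set R \<Longrightarrow> f z \<phi>1 \<phi>2 = g z \<phi>1 \<phi>2) \<Longrightarrow>
  (\<Sum>(z, \<phi>1, \<phi>2) \<leftarrow> R. f z \<phi>1 \<phi>2) = (\<Sum>(z, \<phi>1, \<phi>2) \<leftarrow> R. g z \<phi>1 \<phi>2)"
  by (rule arg_cong[where f=sum_list], rule map_cong[OF refl]) auto

lemma sumR_zero: "(\<And>z \<phi>1 \<phi>2. (z, \<phi>1, \<phi>2) \<in> set R \<Longrightarrow> f z \<phi>1 \<phi>2 = 0) \<Longrightarrow>
  (\<Sum>(z, \<phi>1, \<phi>2) \<leftarrow> R. f z \<phi>1 \<phi>2) = (0::'p)"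
proof -
  assume a: "\<And>z \<phi>1 \<phi>2. (z, \<phi>1, \<phi>2) \<in> set R \<Longrightarrow> f z \<phi>1 \<phi>2 = 0"
  have "(\<Sum>(z, \<phi>1, \<phi>2) \<leftarrow> R. f z \<phi>1 \<phi>2) = (\<Sum>(z, \<phi>1, \<phi>2) \<leftarrow> R. (0::'p))"
    using a by (rule sumR_cong)
  also have "\<dots> = 0" by (induction R) auto
  finally show ?thesis .
qed

lemma act_T:
  assumes f: "f \<in> Hom x0 y0"
  shows "cact sM Hom sP \<pi> (unit_el idn y0) (cact sM Hom sP \<pi> (ev_el x0 y0 f) q) = cact sM Hom sP \<pi> (ev_el x0 y0 f) q"
proof -
  define Hq where "Hq = cfun (ev_el x0 y0 f) q"
  have Hq: "Hq \<in> HC" unfolding Hq_def by (rule cfun_HC[OF mlin_ev])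
  have "cact sM Hom sP \<pi> (unit_el idn y0) (\<pi> Hq) = \<pi> (\<lambda>x y \<phi>. \<pi> (fgen (unit_el idn y0) (\<lambda>_ _. Hq) x y \<phi>))"
    unfolding cact_cfun cfun_def using fgen_pi_fun[of "\<lambda>_ _. Hq" "unit_el idn y0"] Hq by simp
  also have "\<dots> = \<pi> Hq"
  proof (rule contra[OF fgen_HH[OF mlin_unit]])
    show "Hq \<in> HC" by (rule Hq)
  next
    fix x y \<phi> assume "\<phi> \<notin> D x y" then show "Hq x y \<phi> = 0" using HC_out[OF Hq] by simp
  next
    fix x y \<phi> R assume phi: "\<phi> \<in> D x y" and R: "comult_rep sM Hom cmp x y \<phi> R"
    show "Hq x y \<phi> = (\<Sum>(z, \<phi>1, \<phi>2) \<leftarrow> R. fgen (unit_el idn y0) (\<lambda>_ _. Hq) z y \<phi>2 x z \<phi>1)"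
    proof (cases "y = y0")
      case False
      have "(\<Sum>(z, \<phi>1, \<phi>2) \<leftarrow> R. fgen (unit_el idn y0) (\<lambda>_ _. Hq) z y \<phi>2 x z \<phi>1) = 0"
        by (rule sumR_zero) (use False in \<open>auto simp: fgen_def unit_el_def\<close>)
      moreover have "Hq x y \<phi> = 0" using False phi unfolding Hq_def cfun_def ev_el_def by auto
      ultimately show ?thesis by simp
    next
      case True
      note phi' = phi[unfolded True] and R' = R[unfolded True]
      have "(\<Sum>(z, \<phi>1, \<phi>2) \<leftarrow> R. fgen (unit_el idn y0) (\<lambda>_ _. Hq) z y0 \<phi>2 x z \<phi>1)
          = (\<Sum>(z, \<phi>1, \<phi>2) \<leftarrow> R. if z = y0 then sP (\<phi>2 (idn y0)) (Hq x z \<phi>1) else 0)"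
        by (rule sumR_cong) (use CR1[OF R'] in \<open>auto simp: fgen_def unit_el_def\<close>)
      also have "\<dots> = Hq x y0 (\<lambda>g. if g \<in> Hom x y0 then \<phi> (cmp x y0 y0 (idn y0) g) else 0)"
        by (rule Rsum_ev[OF Hq phi' R' idn_in])
      also have "\<dots> = Hq x y0 \<phi>" using restr_id[OF phi'] by simp
      finally show ?thesis using True by simp
    qed
  qed
  finally show ?thesis unfolding Hq_def cact_cfun[symmetric] .
qed

lemma act_in_T: "f \<in> Hom x0 y0 \<Longrightarrow>
  Theta_act sM Hom sP \<pi> x0 y0 f q \<in> Theta_sp sM Hom idn sP \<pi> y0"
  unfolding Theta_act_def Theta_sp_def using act_T by (metis rangeI)

definition K0 where "K0 = {F. \<forall>a b \<chi>. (a = b \<or> prec Hom b a) \<longrightarrow> F a b \<chi> = 0}"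
definition P0 where "P0 = \<pi> ` (HC \<inter> K0)"

lemma K0_closed:
  assumes F: "F \<in> HC" "F \<in> K0" and h: "h \<in> Hom z0 y0"
  shows "cact sM Hom sP \<pi> (ev_el z0 y0 h) (\<pi> F) \<in> P0"
proof -
  define ps where "ps = (\<lambda>x \<phi>. (\<lambda>g. if g \<in> Hom x z0 then \<phi> (cmp x z0 y0 h g) else (0::'k)))"
  define G where "G = (\<lambda>x y \<phi>. if \<phi> \<in> D x y \<and> y = y0 then F x z0 (ps x \<phi>) else 0)"
  have psD: "\<phi> \<in> D x y0 \<Longrightarrow> ps x \<phi> \<in> D x z0" for x \<phi> unfolding ps_def using psiR_D h by blast
  have G: "G \<in> HC" unfolding homCP_def
  proof (intro CollectI allI conjI ballI impI)
    fix x y \<phi> \<psi> assume a: "\<phi> \<in> D x y" "\<psi> \<in> D x y"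
    show "G x y (\<lambda>g. \<phi> g + \<psi> g) = G x y \<phi> + G x y \<psi>"
    proof (cases "y = y0")
      case True
      have "ps x (\<lambda>g. \<phi> g + \<psi> g) = (\<lambda>g. ps x \<phi> g + ps x \<psi> g)" unfolding ps_def by auto
      then show ?thesis using a True HC_add[OF F(1) psD psD] unfolding G_def by (auto simp: D_plus)
    qed (auto simp: G_def)
  next
    fix x y c \<phi> assume a: "\<phi> \<in> D x y"
    show "G x y (\<lambda>g. c * \<phi> g) = sP c (G x y \<phi>)"
    proof (cases "y = y0")
      case True
      have "ps x (\<lambda>g. c * \<phi> g) = (\<lambda>g. c * ps x \<phi> g)" unfolding ps_def by auto
      then show ?thesis using a True HC_scale[OF F(1) psD] unfolding G_def by (auto simp: D_smult)
    qed (auto simp: G_def)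
  next
    fix x y \<phi> assume "\<phi> \<notin> D x y" then show "G x y \<phi> = 0" unfolding G_def by auto
  qed
  have GK: "G \<in> K0" unfolding K0_def
  proof (intro CollectI allI impI)
    fix a b \<chi> assume ab: "a = b \<or> prec Hom b a"
    show "G a b \<chi> = 0"
    proof (cases "\<chi> \<in> D a b \<and> b = y0")
      case True
      show ?thesis
      proof (cases "h = 0 \<or> Hom a z0 = {0}")
        case True2: True
        have "ps a \<chi> = (\<lambda>g. 0)"
          using True2 True D_at0[of \<chi> a b] cmp_0L cmp_0R h unfolding ps_def by (auto intro!: ext)
        then show ?thesis using True HC_zero[OF F(1)] unfolding G_def by simp
      next
        case False
        then have p1: "prec Hom a z0" using prec_hom' by auto
        have p2: "prec Hom z0 y0" using False h prec_hom by auto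
        have "a = z0 \<or> prec Hom z0 a" using ab True p2 prec_trans by auto
        then show ?thesis using F(2) True unfolding K0_def G_def by auto
      qed
    qed (auto simp: G_def)
  qed
  have "cact sM Hom sP \<pi> (ev_el z0 y0 h) (\<pi> F) = \<pi> (\<lambda>x y \<phi>. \<pi> (fgen (ev_el z0 y0 h) (\<lambda>_ _. F) x y \<phi>))"
    unfolding cact_cfun cfun_def using fgen_pi_fun[of "\<lambda>_ _. F" "ev_el z0 y0 h"] F by simp
  also have "\<dots> = \<pi> G"
  proof (rule contra[OF fgen_HH[OF mlin_ev]])
    show "F \<in> HC" by (rule F)
  next
    fix x y \<phi> assume "\<phi> \<notin> D x y" then show "G x y \<phi> = 0" unfolding G_def by simp
  next
    fix x y \<phi> R assume phi: "\<phi> \<in> D x y" and R: "comult_rep sM Hom cmp x y \<phi> R"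
    show "G x y \<phi> = (\<Sum>(z, \<phi>1, \<phi>2) \<leftarrow> R. fgen (ev_el z0 y0 h) (\<lambda>_ _. F) z y \<phi>2 x z \<phi>1)"
    proof (cases "y = y0")
      case False
      have "(\<Sum>(z, \<phi>1, \<phi>2) \<leftarrow> R. fgen (ev_el z0 y0 h) (\<lambda>_ _. F) z y \<phi>2 x z \<phi>1) = 0"
        by (rule sumR_zero) (use False in \<open>auto simp: fgen_def ev_el_def\<close>)
      then show ?thesis using False unfolding G_def by simp
    next
      case True
      note phi' = phi[unfolded True] and R' = R[unfolded True]
      have "(\<Sum>(z, \<phi>1, \<phi>2) \<leftarrow> R. fgen (ev_el z0 y0 h) (\<lambda>_ _. F) z y0 \<phi>2 x z \<phi>1)
          = (\<Sum>(z, \<phi>1, \<phi>2) \<leftarrow> R. if z = z0 then sP (\<phi>2 h) (F x z \<phi>1) else 0)"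
        by (rule sumR_cong) (use CR1[OF R'] in \<open>auto simp: fgen_def ev_el_def\<close>)
      also have "\<dots> = F x z0 (ps x \<phi>)"
        unfolding ps_def by (rule Rsum_ev[OF F(1) phi' R' h])
      finally show ?thesis using True phi unfolding G_def by simp
    qed
  qed
  finally show ?thesis unfolding P0_def using G GK by blast
qed

lemma Pdecomp:
  assumes all: "\<And>x. cact sM Hom sP \<pi> (unit_el idn x) p \<in> P0"
  shows "p \<in> P0"
proof -
  define Hu where "Hu = (\<lambda>z::'o. cfun (unit_el idn z) p)"
  have Hu: "Hu z \<in> HC" for z unfolding Hu_def by (rule cfun_HC[OF mlin_unit])
  have "\<forall>x. \<exists>F. F \<in> HC \<and> F \<in> K0 \<and> \<pi> F = cact sM Hom sP \<pi> (unit_el idn x) p"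
  proof
    fix x
    obtain F where "F \<in> HC \<inter> K0" "cact sM Hom sP \<pi> (unit_el idn x) p = \<pi> F"
      using all[of x] unfolding P0_def by blast
    then show "\<exists>F. F \<in> HC \<and> F \<in> K0 \<and> \<pi> F = cact sM Hom sP \<pi> (unit_el idn x) p" by auto
  qed
  then obtain Fx where Fx0: "\<forall>x. Fx x \<in> HC \<and> Fx x \<in> K0 \<and> \<pi> (Fx x) = cact sM Hom sP \<pi> (unit_el idn x) p"
    by (rule choice[THEN exE]) blast
  then have Fx: "\<And>x. Fx x \<in> HC" "\<And>x. Fx x \<in> K0" "\<And>x. \<pi> (Fx x) = cact sM Hom sP \<pi> (unit_el idn x) p"
    by auto
  have "p = \<pi> (\<lambda>x y \<phi>. if \<phi> \<in> D x y \<and> x = y then sP (\<phi> (idn x)) p else 0)" using counit by simp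
  also have "\<dots> = \<pi> (\<lambda>x y \<phi>. \<pi> (fgen eps (\<lambda>z y. Hu z) x y \<phi>))"
  proof (rule contra[OF fgen_HH[OF mlin_eps], symmetric])
    show "Hu z \<in> HC" for z by (rule Hu)
  next
    fix x y \<phi> assume "\<phi> \<notin> D x y"
    then show "(if \<phi> \<in> D x y \<and> x = y then sP (\<phi> (idn x)) p else 0) = 0" by simp
  next
    fix x y \<phi> R assume phi: "\<phi> \<in> D x y" and R: "comult_rep sM Hom cmp x y \<phi> R"
    have "(\<Sum>(z, \<phi>1, \<phi>2) \<leftarrow> R. fgen eps (\<lambda>z y. Hu z) z y \<phi>2 x z \<phi>1)
          = (\<Sum>(z, \<phi>1, \<phi>2) \<leftarrow> R. if z = y then sP (\<phi>2 (idn y)) (Hu y x z \<phi>1) else 0)"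
      by (rule sumR_cong) (use CR1[OF R] in \<open>auto simp: fgen_def eps_def\<close>)
    also have "\<dots> = Hu y x y (\<lambda>g. if g \<in> Hom x y then \<phi> (cmp x y y (idn y) g) else 0)"
      using Rsum_ev[OF Hu phi R, of "idn y" y] idn_in by simp
    also have "\<dots> = Hu y x y \<phi>" using restr_id[OF phi] by simp
    also have "\<dots> = (if \<phi> \<in> D x y \<and> x = y then sP (\<phi> (idn x)) p else 0)"
      using phi unfolding Hu_def cfun_def unit_el_def by auto
    finally show "(if \<phi> \<in> D x y \<and> x = y then sP (\<phi> (idn x)) p else 0) =
        (\<Sum>(z, \<phi>1, \<phi>2) \<leftarrow> R. fgen eps (\<lambda>z y. Hu z) z y \<phi>2 x z \<phi>1)" by simp
  qed
  also have "(\<lambda>x y \<phi>. \<pi> (fgen eps (\<lambda>z y. Hu z) x y \<phi>)) = (\<lambda>x y \<phi>. \<pi> (fgen eps (\<lambda>z y. Fx z) x y \<phi>))"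
  proof -
    have eq: "\<pi> (Hu x) = \<pi> (Fx x)" for x using Fx(3) unfolding Hu_def cact_cfun by simp
    have "(\<lambda>x y \<phi>. \<pi> (fgen eps (\<lambda>z y. Hu z) x y \<phi>)) = (\<lambda>x y \<phi>. if \<phi> \<in> D x y then sP (eps x y \<phi>) (\<pi> (Hu x)) else 0)"
      using fgen_pi_fun[of "\<lambda>z y. Hu z" eps] Hu by simp
    also have "\<dots> = (\<lambda>x y \<phi>. if \<phi> \<in> D x y then sP (eps x y \<phi>) (\<pi> (Fx x)) else 0)"
      by (simp only: eq)
    also have "\<dots> = (\<lambda>x y \<phi>. \<pi> (fgen eps (\<lambda>z y. Fx z) x y \<phi>))"
      using fgen_pi_fun[of "\<lambda>z y. Fx z" eps] Fx(1) by simp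
    finally show ?thesis .
  qed
  also have "\<pi> \<dots> = \<pi> (\<lambda>x y \<phi>. Fx y x y \<phi>)"
  proof (rule contra[OF fgen_HH[OF mlin_eps]])
    show "Fx z \<in> HC" for z by (rule Fx)
  next
    fix x y \<phi> assume "\<phi> \<notin> D x y" then show "Fx y x y \<phi> = 0" using HC_out[OF Fx(1)] by simp
  next
    fix x y \<phi> R assume phi: "\<phi> \<in> D x y" and R: "comult_rep sM Hom cmp x y \<phi> R"
    have "(\<Sum>(z, \<phi>1, \<phi>2) \<leftarrow> R. fgen eps (\<lambda>z y. Fx z) z y \<phi>2 x z \<phi>1)
          = (\<Sum>(z, \<phi>1, \<phi>2) \<leftarrow> R. if z = y then sP (\<phi>2 (idn y)) (Fx y x z \<phi>1) else 0)"
      by (rule sumR_cong) (use CR1[OF R] in \<open>auto simp: fgen_def eps_def\<close>)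
    also have "\<dots> = Fx y x y (\<lambda>g. if g \<in> Hom x y then \<phi> (cmp x y y (idn y) g) else 0)"
      using Rsum_ev[OF Fx(1) phi R, of "idn y" y] idn_in by simp
    also have "\<dots> = Fx y x y \<phi>" using restr_id[OF phi] by simp
    finally show "Fx y x y \<phi> = (\<Sum>(z, \<phi>1, \<phi>2) \<leftarrow> R. fgen eps (\<lambda>z y. Fx z) z y \<phi>2 x z \<phi>1)" by simp
  qed
  finally have pe: "p = \<pi> (\<lambda>x y \<phi>. Fx y x y \<phi>)" .
  have "(\<lambda>x y \<phi>. Fx y x y \<phi>) \<in> HC"
    unfolding homCP_def by (intro CollectI allI conjI ballI impI) (simp_all add: HC_add HC_scale HC_out Fx(1))
  moreover have "(\<lambda>x y \<phi>. Fx y x y \<phi>) \<in> K0"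
    using Fx(2) unfolding K0_def by simp
  ultimately show ?thesis unfolding P0_def using pe by blast
qed

end



context cs begin

abbreviation TT where "TT \<equiv> Theta_sp sM Hom idn sP \<pi>"

lemma T_subspace: "P.subspace (TT x)"
proof (rule P.subspaceI)
  show "0 \<in> TT x" unfolding Theta_sp_def using cact_zero[OF mlin_unit, of x] by (metis rangeI)
next
  fix u v assume "u \<in> TT x" "v \<in> TT x"
  then obtain a b where "u = cact sM Hom sP \<pi> (unit_el idn x) a" "v = cact sM Hom sP \<pi> (unit_el idn x) b"
    unfolding Theta_sp_def by auto
  then show "u + v \<in> TT x" unfolding Theta_sp_def using cact_add[OF mlin_unit, of x a b] by (metis rangeI)
next
  fix c u assume "u \<in> TT x"
  then obtain a where "u = cact sM Hom sP \<pi> (unit_el idn x) a"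
    unfolding Theta_sp_def by auto
  then show "sP c u \<in> TT x" unfolding Theta_sp_def using cact_scale[OF mlin_unit, of x c a] by (metis rangeI)
qed

lemma P0_subspace: "P.subspace P0"
proof (rule P.subspaceI)
  have "(\<lambda>x y \<phi>. 0) \<in> HC \<inter> K0" unfolding K0_def by simp
  then show "0 \<in> P0" unfolding P0_def using pi_zero by (intro image_eqI[of 0 \<pi> "\<lambda>x y \<phi>. 0"]) auto
next
  fix u v assume "u \<in> P0" "v \<in> P0"
  then obtain F G where FG: "F \<in> HC" "F \<in> K0" "G \<in> HC" "G \<in> K0" "u = \<pi> F" "v = \<pi> G"
    unfolding P0_def by auto
  have "(\<lambda>x y \<phi>. F x y \<phi> + G x y \<phi>) \<in> HC \<inter> K0" using FG HC_plus unfolding K0_def by auto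
  moreover have "u + v = \<pi> (\<lambda>x y \<phi>. F x y \<phi> + G x y \<phi>)" using pi_add[OF FG(1) FG(3)] FG(5,6) by simp
  ultimately show "u + v \<in> P0" unfolding P0_def by blast
next
  fix c u assume "u \<in> P0"
  then obtain F where FG: "F \<in> HC" "F \<in> K0" "u = \<pi> F"
    unfolding P0_def by auto
  have "(\<lambda>x y \<phi>. sP c (F x y \<phi>)) \<in> HC \<inter> K0" using FG HC_smult[of F "\<lambda>_ _. c"] unfolding K0_def by auto
  moreover have "sP c u = \<pi> (\<lambda>x y \<phi>. sP c (F x y \<phi>))" using pi_scale[OF FG(1)] FG(3) by simp
  ultimately show "sP c u \<in> P0" unfolding P0_def by blast
qed

lemma T_in_P0_act:
  assumes f: "f \<in> Hom x y" and xy: "x \<noteq> y" "\<not> prec Hom y x"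
  shows "cact sM Hom sP \<pi> (ev_el x y f) p \<in> P0"
proof -
  have "cfun (ev_el x y f) p \<in> K0" unfolding K0_def cfun_def ev_el_def
    using xy by auto
  then show ?thesis unfolding P0_def cact_cfun using cfun_HC[OF mlin_ev] by blast
qed

lemma main_from_P0:
  assumes "\<exists>p. p \<notin> P0"
  shows "\<exists>Q. big_submodule Hom sP TT (Theta_act sM Hom sP \<pi>) Q \<and> (\<exists>x. Q x \<noteq> TT x)"
proof -
  obtain p where p: "p \<notin> P0" using assms by blast
  then obtain y where y: "cact sM Hom sP \<pi> (unit_el idn y) p \<notin> P0" using Pdecomp by blast
  define Q where "Q = (\<lambda>x. TT x \<inter> P0)"
  have sub: "submodule Hom sP TT (Theta_act sM Hom sP \<pi>) Q"
    unfolding submodule_def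
  proof (intro conjI allI impI)
    fix x show "Q x \<subseteq> TT x" unfolding Q_def by auto
    show "P.subspace (Q x)" unfolding Q_def by (rule P.subspace_inter[OF T_subspace P0_subspace])
  next
    fix x y f q assume f: "f \<in> Hom x y" and q: "q \<in> Q x"
    then obtain F where F: "F \<in> HC" "F \<in> K0" "q = \<pi> F" unfolding Q_def P0_def by auto
    have "Theta_act sM Hom sP \<pi> x y f q \<in> TT y" by (rule act_in_T[OF f])
    moreover have "Theta_act sM Hom sP \<pi> x y f q \<in> P0"
      unfolding Theta_act_def F(3) by (rule K0_closed[OF F(1,2) f])
    ultimately show "Theta_act sM Hom sP \<pi> x y f q \<in> Q y" unfolding Q_def by auto
  qed
  have big: "big_submodule Hom sP TT (Theta_act sM Hom sP \<pi>) Q"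
    unfolding big_submodule_def
  proof (intro conjI sub allI)
    fix y
    define A where "A = insert y {x. prec Hom y x \<and> prec Hom x y}"
    have "finite {x. prec Hom y x \<and> prec Hom x y}" using LF unfolding locally_finite_def by blast
    then have "finite A" unfolding A_def by simp
    moreover have "\<forall>x. x \<notin> A \<longrightarrow> (\<forall>f\<in>Hom x y. \<forall>q\<in>TT x. Theta_act sM Hom sP \<pi> x y f q \<in> Q y)"
    proof (intro allI impI ballI)
      fix x f q assume x: "x \<notin> A" and f: "f \<in> Hom x y" and q: "q \<in> TT x"
      have "Theta_act sM Hom sP \<pi> x y f q \<in> TT y" by (rule act_in_T[OF f])
      moreover have "Theta_act sM Hom sP \<pi> x y f q \<in> P0"
      proof (cases "f = 0")
        case True
        have "cfun (ev_el x y f) q = (\<lambda>x y \<phi>. 0)" unfolding cfun_def ev_el_def True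
          by (intro ext) (auto simp: D_at0)
        then show ?thesis unfolding Theta_act_def cact_cfun using P.subspace_0[OF P0_subspace] pi_zero by simp
      next
        case False
        then have "prec Hom x y" using prec_hom f by blast
        then have "x \<noteq> y" "\<not> prec Hom y x" using x unfolding A_def by auto
        then show ?thesis unfolding Theta_act_def by (rule T_in_P0_act[OF f])
      qed
      ultimately show "Theta_act sM Hom sP \<pi> x y f q \<in> Q y" unfolding Q_def by auto
    qed
    ultimately show "\<exists>A. finite A \<and> (\<forall>x. x \<notin> A \<longrightarrow> (\<forall>f\<in>Hom x y. \<forall>p\<in>TT x. Theta_act sM Hom sP \<pi> x y f p \<in> Q y))"
      by blast
  qed
  have "cact sM Hom sP \<pi> (unit_el idn y) p \<in> TT y" unfolding Theta_sp_def by simp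
  then have "Q y \<noteq> TT y" using y unfolding Q_def by auto
  then show ?thesis using big by blast
qed

end


context cs begin
lemma LF1: "\<exists>B. finite B \<and> B \<subseteq> Hom x y \<and> M.span B = Hom x y"
  using LF unfolding locally_finite_def by blast
lemma LF2: "finite {z. prec Hom x z \<and> prec Hom z y}"
  using LF unfolding locally_finite_def by blast




lemma Bs_ex: "\<exists>B. finite B \<and> B \<subseteq> Hom x y \<and> M.independent B \<and> M.span B = Hom x y"
proof -
  obtain B0 where B0: "finite B0" "B0 \<subseteq> Hom x y" "M.span B0 = Hom x y"
    using LF1[of x y] by (elim exE conjE)
  obtain B where B: "B \<subseteq> B0" "M.independent B" "B0 \<subseteq> M.span B"
    by (rule M.maximal_independent_subset[of B0])
  have s1: "M.span B \<subseteq> Hom x y" using M.span_mono[OF B(1)] B0(3) by (rule subset_trans[OF _ equalityD1])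
  have "M.span B0 \<subseteq> M.span (M.span B)" by (rule M.span_mono[OF B(3)])
  then have s2: "Hom x y \<subseteq> M.span B" unfolding M.span_span B0(3) .
  have "finite B" using B(1) B0(1) by (rule finite_subset)
  moreover have "B \<subseteq> Hom x y" using B(1) B0(2) by (rule subset_trans)
  moreover have "M.span B = Hom x y" using s1 s2 by (rule equalityI)
  ultimately show ?thesis using B(2) by blast
qed
definition Bs where "Bs x y = (SOME B. finite B \<and> B \<subseteq> Hom x y \<and> M.independent B \<and> M.span B = Hom x y)"

lemma Bs: "finite (Bs x y)" "Bs x y \<subseteq> Hom x y" "M.independent (Bs x y)" "M.span (Bs x y) = Hom x y"
  using someI_ex[OF Bs_ex[of x y]] unfolding Bs_def[symmetric] by auto

lemma Bs_in: "i \<in> Bs x y \<Longrightarrow> i \<in> Hom x y" using Bs(2) by blast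

definition dl where "dl x y i = (\<lambda>g. if g \<in> Hom x y then M.representation (Bs x y) g i else 0)"

lemma dl_D: "dl x y i \<in> D x y"
  unfolding dualsp_def dl_def
  using M.representation_add[OF Bs(3)] M.representation_scale[OF Bs(3)] Bs(4)
  by (auto simp: Hom_add Hom_scale)

lemma vec_expand: "g \<in> Hom x y \<Longrightarrow> (\<Sum>i\<in>Bs x y. sM (dl x y i g) i) = g"
  unfolding dl_def using M.sum_representation_eq[OF Bs(3) _ Bs(1), of g] Bs(4) by simp

lemma fun_expand: "\<phi> \<in> D x y \<Longrightarrow> (\<lambda>g. \<Sum>i\<in>Bs x y. \<phi> i * dl x y i g) = \<phi>"
proof
  fix g assume phi: "\<phi> \<in> D x y"
  show "(\<Sum>i\<in>Bs x y. \<phi> i * dl x y i g) = \<phi> g"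
  proof (cases "g \<in> Hom x y")
    case True
    have "\<phi> g = \<phi> (\<Sum>i\<in>Bs x y. sM (dl x y i g) i)" using vec_expand[OF True] by simp
    also have "\<dots> = (\<Sum>i\<in>Bs x y. \<phi> (sM (dl x y i g) i))"
      by (rule D_vsum[OF phi]) (simp add: Hom_scale Bs_in)
    also have "\<dots> = (\<Sum>i\<in>Bs x y. \<phi> i * dl x y i g)"
      by (rule sum.cong) (auto simp: D_scale[OF phi] Bs_in mult.commute)
    finally show ?thesis by simp
  next
    case False
    then show ?thesis using D_out[OF phi False] unfolding dl_def by simp
  qed
qed

lemma Bs_empty: "Hom x y = {0} \<Longrightarrow> Bs x y = {}"
  using Bs(2)[of x y] Bs(3)[of x y] M.dependent_zero[of "Bs x y"] by auto

lemma HH_in: "f \<in> HH \<Longrightarrow> f x y \<phi> \<in> HC"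
  unfolding homCHomCP_def by simp
lemma HH_add: "f \<in> HH \<Longrightarrow> \<phi> \<in> D x y \<Longrightarrow> \<psi> \<in> D x y \<Longrightarrow>
   f x y (\<lambda>g. \<phi> g + \<psi> g) = (\<lambda>a b \<chi>. f x y \<phi> a b \<chi> + f x y \<psi> a b \<chi>)"
  unfolding homCHomCP_def by simp
lemma HH_scale: "f \<in> HH \<Longrightarrow> \<phi> \<in> D x y \<Longrightarrow>
   f x y (\<lambda>g. c * \<phi> g) = (\<lambda>a b \<chi>. sP c (f x y \<phi> a b \<chi>))"
  unfolding homCHomCP_def by simp
lemma HH_zero: "f \<in> HH \<Longrightarrow> f x y (\<lambda>g. 0) = (\<lambda>a b \<chi>. 0)"
  using HH_scale[of f "\<lambda>g. 0" x y 0] by simp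
lemma HH_list: "f \<in> HH \<Longrightarrow> (\<And>r. r \<in> set R \<Longrightarrow> c r \<in> D x y) \<Longrightarrow>
   f x y (\<lambda>g. \<Sum>r\<leftarrow>R. c r g) = (\<lambda>a b \<chi>. \<Sum>r\<leftarrow>R. f x y (c r) a b \<chi>)"
proof (induction R)
  case Nil then show ?case using HH_zero by simp
next
  case (Cons r R)
  then show ?case using HH_add[of f "c r" x y "\<lambda>g. \<Sum>r\<leftarrow>R. c r g"] D_list[of R c x y] by auto
qed

definition Zs where "Zs x y = {z. Hom x z \<noteq> {0} \<and> Hom z y \<noteq> {0}}"

lemma Zs_fin: "finite (Zs x y)"
proof -
  have "Zs x y \<subseteq> {z. prec Hom x z \<and> prec Hom z y}" unfolding Zs_def using prec_hom' by auto
  then show ?thesis using LF2[of x y] by (rule finite_subset)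
qed

definition psi where "psi \<phi> x y z i = (\<lambda>h. if h \<in> Hom z y then \<phi> (cmp x z y h i) else 0)"

lemma psi_D: "\<phi> \<in> D x y \<Longrightarrow> i \<in> Hom x z \<Longrightarrow> psi \<phi> x y z i \<in> D z y"
  unfolding dualsp_def psi_def
  by (auto simp: cmp_addL cmp_scaleL cmp_in Hom_add Hom_scale D_add D_scale)

lemma psi_add: "psi (\<lambda>g. (\<phi>::'m\<Rightarrow>'k) g + \<psi> g) x y z i = (\<lambda>h. psi \<phi> x y z i h + psi \<psi> x y z i h)"
  unfolding psi_def by (intro ext) auto
lemma psi_scale: "psi (\<lambda>g. (c::'k) * \<phi> g) x y z i = (\<lambda>h. c * psi \<phi> x y z i h)"
  unfolding psi_def by (intro ext) auto

definition compR where
  "compR f x y \<phi> = (\<Sum>z\<in>Zs x y. \<Sum>i\<in>Bs x z. f z y (psi \<phi> x y z i) x z (dl x z i))"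

lemma regroup:
  assumes "finite W" "fst ` set R \<subseteq> W"
  shows "(\<Sum>(z, \<phi>1, \<phi>2) \<leftarrow> R. k z \<phi>1 \<phi>2) = (\<Sum>z'\<in>W. (\<Sum>(z, \<phi>1, \<phi>2) \<leftarrow> R. if z = z' then k z' \<phi>1 \<phi>2 else (0::'p)))"
  using assms(2)
proof (induction R)
  case Nil then show ?case by simp
next
  case (Cons r R)
  obtain z \<phi>1 \<phi>2 where r: "r = (z, \<phi>1, \<phi>2)" by (cases r) auto
  have zW: "z \<in> W" using Cons.prems r by auto
  have "(\<Sum>(z, \<phi>1, \<phi>2) \<leftarrow> r # R. k z \<phi>1 \<phi>2) = k z \<phi>1 \<phi>2 + (\<Sum>(z, \<phi>1, \<phi>2) \<leftarrow> R. k z \<phi>1 \<phi>2)"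
    using r by simp
  also have "\<dots> = (\<Sum>z'\<in>W. if z = z' then k z' \<phi>1 \<phi>2 else 0) + (\<Sum>z'\<in>W. (\<Sum>(z, \<phi>1, \<phi>2) \<leftarrow> R. if z = z' then k z' \<phi>1 \<phi>2 else 0))"
    using Cons zW assms(1) by (simp add: sum.delta)
  also have "\<dots> = (\<Sum>z'\<in>W. (\<Sum>(z, \<phi>1, \<phi>2) \<leftarrow> r # R. if z = z' then k z' \<phi>1 \<phi>2 else 0))"
    using r by (simp add: sum.distrib)
  finally show ?case .
qed

lemma swapR: "(\<Sum>(z, \<phi>1, \<phi>2) \<leftarrow> R. \<Sum>i\<in>I. k i z \<phi>1 \<phi>2) = (\<Sum>i\<in>I. (\<Sum>(z, \<phi>1, \<phi>2) \<leftarrow> R. k i z \<phi>1 \<phi>2 :: 'p))"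
proof (induction R)
  case Nil then show ?case by simp
next
  case (Cons r R)
  obtain z \<phi>1 \<phi>2 where r: "r = (z, \<phi>1, \<phi>2)" by (cases r) auto
  show ?case using Cons r by (simp add: sum.distrib)
qed

lemma Rsum_gen:
  assumes f: "f \<in> HH" and phi: "\<phi> \<in> D x y" and R: "comult_rep sM Hom cmp x y \<phi> R"
  shows "(\<Sum>(z, \<phi>1, \<phi>2) \<leftarrow> R. f z y \<phi>2 x z \<phi>1) = compR f x y \<phi>"
proof -
  define W where "W = fst ` set R"
  have W: "finite W" unfolding W_def by simp
  define S where "S = (\<lambda>z. \<Sum>i\<in>Bs x z. f z y (psi \<phi> x y z i) x z (dl x z i))"
  have stepD: "(\<lambda>h. \<Sum>(z, \<phi>1, \<phi>2) \<leftarrow> R. if z = z' then \<phi>1 i * \<phi>2 h else 0) = psi \<phi> x y z' i"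
    if i: "i \<in> Hom x z'" for z' i
  proof
    fix h
    show "(\<Sum>(z, \<phi>1, \<phi>2) \<leftarrow> R. if z = z' then \<phi>1 i * \<phi>2 h else 0) = psi \<phi> x y z' i h"
    proof (cases "h \<in> Hom z' y")
      case True then show ?thesis unfolding psi_def using CR2[OF R i True] by simp
    next
      case False
      have "(\<Sum>(z, \<phi>1, \<phi>2) \<leftarrow> R. if z = z' then \<phi>1 i * \<phi>2 h else 0) = (0::'k)"
      proof -
        have "(\<Sum>(z, \<phi>1, \<phi>2) \<leftarrow> R. if z = z' then \<phi>1 i * \<phi>2 h else 0) = (\<Sum>(z, \<phi>1, \<phi>2) \<leftarrow> R. (0::'k))"
          by (rule arg_cong[where f=sum_list], rule map_cong[OF refl])
             (use CR1[OF R] False D_out in fastforce)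
        also have "\<dots> = 0" by (induction R) auto
        finally show ?thesis .
      qed
      then show ?thesis unfolding psi_def using False by simp
    qed
  qed
  have "(\<Sum>(z, \<phi>1, \<phi>2) \<leftarrow> R. f z y \<phi>2 x z \<phi>1) =
        (\<Sum>(z, \<phi>1, \<phi>2) \<leftarrow> R. \<Sum>i\<in>Bs x z. f z y (\<lambda>h. \<phi>1 i * \<phi>2 h) x z (dl x z i))"
  proof (rule sumR_cong)
    fix z \<phi>1 \<phi>2 assume r: "(z, \<phi>1, \<phi>2) \<in> set R"
    note d = CR1[OF R r]
    have "f z y \<phi>2 x z \<phi>1 = f z y \<phi>2 x z (\<lambda>g. \<Sum>i\<in>Bs x z. \<phi>1 i * dl x z i g)"
      using fun_expand[OF d[THEN conjunct1]] by simp
    also have "\<dots> = (\<Sum>i\<in>Bs x z. f z y \<phi>2 x z (\<lambda>g. \<phi>1 i * dl x z i g))"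
      by (rule HC_sum[OF HH_in[OF f]]) (simp add: D_smult dl_D)
    also have "\<dots> = (\<Sum>i\<in>Bs x z. f z y (\<lambda>h. \<phi>1 i * \<phi>2 h) x z (dl x z i))"
      by (rule sum.cong) (auto simp: HC_scale[OF HH_in[OF f] dl_D] HH_scale[OF f d[THEN conjunct2]])
    finally show "f z y \<phi>2 x z \<phi>1 = (\<Sum>i\<in>Bs x z. f z y (\<lambda>h. \<phi>1 i * \<phi>2 h) x z (dl x z i))" .
  qed
  also have "\<dots> = (\<Sum>z'\<in>W. (\<Sum>(z, \<phi>1, \<phi>2) \<leftarrow> R. if z = z' then (\<Sum>i\<in>Bs x z'. f z' y (\<lambda>h. \<phi>1 i * \<phi>2 h) x z' (dl x z' i)) else 0))"
    by (rule regroup[OF W]) (simp add: W_def)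
  also have "\<dots> = (\<Sum>z'\<in>W. \<Sum>i\<in>Bs x z'. (\<Sum>(z, \<phi>1, \<phi>2) \<leftarrow> R. if z = z' then f z' y (\<lambda>h. \<phi>1 i * \<phi>2 h) x z' (dl x z' i) else 0))"
  proof (rule sum.cong[OF refl])
    fix z' assume "z' \<in> W"
    have "(\<Sum>(z, \<phi>1, \<phi>2) \<leftarrow> R. if z = z' then (\<Sum>i\<in>Bs x z'. f z' y (\<lambda>h. \<phi>1 i * \<phi>2 h) x z' (dl x z' i)) else 0)
       = (\<Sum>(z, \<phi>1, \<phi>2) \<leftarrow> R. \<Sum>i\<in>Bs x z'. (if z = z' then f z' y (\<lambda>h. \<phi>1 i * \<phi>2 h) x z' (dl x z' i) else 0))"
      by (rule sumR_cong) simp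
    also have "\<dots> = (\<Sum>i\<in>Bs x z'. (\<Sum>(z, \<phi>1, \<phi>2) \<leftarrow> R. if z = z' then f z' y (\<lambda>h. \<phi>1 i * \<phi>2 h) x z' (dl x z' i) else 0))"
      by (rule swapR)
    finally show "(\<Sum>(z, \<phi>1, \<phi>2) \<leftarrow> R. if z = z' then (\<Sum>i\<in>Bs x z'. f z' y (\<lambda>h. \<phi>1 i * \<phi>2 h) x z' (dl x z' i)) else 0)
       = (\<Sum>i\<in>Bs x z'. (\<Sum>(z, \<phi>1, \<phi>2) \<leftarrow> R. if z = z' then f z' y (\<lambda>h. \<phi>1 i * \<phi>2 h) x z' (dl x z' i) else 0))" .
  qed
  also have "\<dots> = (\<Sum>z'\<in>W. S z')"
    unfolding S_def
  proof (rule sum.cong[OF refl], rule sum.cong[OF refl])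
    fix z' i assume i: "i \<in> Bs x z'"
    define c where "c = (\<lambda>r::'o \<times> ('m \<Rightarrow> 'k) \<times> ('m \<Rightarrow> 'k). \<lambda>h. case r of (z, \<phi>1, \<phi>2) \<Rightarrow> if z = z' then \<phi>1 i * \<phi>2 h else 0)"
    have cD: "c r \<in> D z' y" if "r \<in> set R" for r
    proof -
      obtain z \<phi>1 \<phi>2 where rr: "r = (z, \<phi>1, \<phi>2)" by (cases r) auto
      show ?thesis using CR1[OF R that[unfolded rr]] D_smult[of \<phi>2 z' y "\<phi>1 i"] unfolding c_def rr
        by (cases "z = z'") auto
    qed
    have "(\<Sum>(z, \<phi>1, \<phi>2) \<leftarrow> R. if z = z' then f z' y (\<lambda>h. \<phi>1 i * \<phi>2 h) x z' (dl x z' i) else 0)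
        = (\<Sum>r\<leftarrow>R. f z' y (c r) x z' (dl x z' i))"
      by (rule arg_cong[where f=sum_list], rule map_cong[OF refl]) (auto simp: c_def HH_zero[OF f])
    also have "\<dots> = f z' y (\<lambda>h. \<Sum>r\<leftarrow>R. c r h) x z' (dl x z' i)"
      using HH_list[OF f, of R c z' y] cD by simp
    also have "(\<lambda>h. \<Sum>r\<leftarrow>R. c r h) = (\<lambda>h. \<Sum>(z, \<phi>1, \<phi>2) \<leftarrow> R. if z = z' then \<phi>1 i * \<phi>2 h else 0)"
      unfolding c_def by (intro ext arg_cong[where f=sum_list] map_cong[OF refl]) auto
    also have "\<dots> = psi \<phi> x y z' i" by (rule stepD[OF Bs_in[OF i]])
    finally show "(\<Sum>(z, \<phi>1, \<phi>2) \<leftarrow> R. if z = z' then f z' y (\<lambda>h. \<phi>1 i * \<phi>2 h) x z' (dl x z' i) else 0)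
        = f z' y (psi \<phi> x y z' i) x z' (dl x z' i)" .
  qed
  also have "\<dots> = (\<Sum>z'\<in>W \<union> Zs x y. S z')"
  proof (rule sum.mono_neutral_left)
    show "finite (W \<union> Zs x y)" using W Zs_fin by simp
    show "W \<subseteq> W \<union> Zs x y" by simp
    show "\<forall>z'\<in>W \<union> Zs x y - W. S z' = 0"
    proof
      fix z' assume "z' \<in> W \<union> Zs x y - W"
      then have nz: "z' \<notin> W" by simp
      have "psi \<phi> x y z' i = (\<lambda>h. 0)" if i: "i \<in> Bs x z'" for i
      proof -
        have "psi \<phi> x y z' i = (\<lambda>h. \<Sum>(z, \<phi>1, \<phi>2) \<leftarrow> R. if z = z' then \<phi>1 i * \<phi>2 h else 0)"
          using stepD[OF Bs_in[OF i]] by simp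
        also have "\<dots> = (\<lambda>h. \<Sum>(z, \<phi>1, \<phi>2) \<leftarrow> R. (0::'k))"
          by (intro ext arg_cong[where f=sum_list] map_cong[OF refl]) (use nz W_def in force)
        also have "\<dots> = (\<lambda>h. 0)" by (intro ext) (induction R, auto)
        finally show ?thesis .
      qed
      then show "S z' = 0" unfolding S_def using HH_zero[OF f] by simp
    qed
  qed
  also have "\<dots> = (\<Sum>z'\<in>Zs x y. S z')"
  proof (rule sum.mono_neutral_right)
    show "finite (W \<union> Zs x y)" using W Zs_fin by simp
    show "Zs x y \<subseteq> W \<union> Zs x y" by simp
    show "\<forall>z'\<in>W \<union> Zs x y - Zs x y. S z' = 0"
    proof
      fix z' assume "z' \<in> W \<union> Zs x y - Zs x y"
      then have "Hom x z' = {0} \<or> Hom z' y = {0}" unfolding Zs_def by auto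
      then show "S z' = 0"
      proof
        assume "Hom x z' = {0}" then show ?thesis unfolding S_def using Bs_empty by simp
      next
        assume h0: "Hom z' y = {0}"
        have "psi \<phi> x y z' i = (\<lambda>h. 0)" if i: "i \<in> Bs x z'" for i
          unfolding psi_def using h0 cmp_0L[OF Bs_in[OF i]] D_at0[OF phi] by (intro ext) auto
        then show ?thesis unfolding S_def using HH_zero[OF f] by simp
      qed
    qed
  qed
  finally show ?thesis unfolding compR_def S_def .
qed

end



context cs begin

definition Gam where
  "Gam q = (if q = 0 then (\<lambda>a b \<chi>. 0) else SOME F. F \<in> HC \<and> F \<in> K0 \<and> \<pi> F = q)"

lemma Gam:
  assumes A: "\<forall>q. q \<in> P0"
  shows "Gam q \<in> HC" "Gam q \<in> K0" "\<pi> (Gam q) = q"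
proof -
  have "Gam q \<in> HC \<and> Gam q \<in> K0 \<and> \<pi> (Gam q) = q"
  proof (cases "q = 0")
    case True then show ?thesis unfolding Gam_def K0_def using pi_zero by simp
  next
    case False
    have "q \<in> \<pi> ` (HC \<inter> K0)" using A unfolding P0_def by simp
    then obtain F where "F \<in> HC \<inter> K0" "q = \<pi> F" by (rule imageE)
    then have "\<exists>F. F \<in> HC \<and> F \<in> K0 \<and> \<pi> F = q" by auto
    from someI_ex[OF this] show ?thesis unfolding Gam_def using False by simp
  qed
  then show "Gam q \<in> HC" "Gam q \<in> K0" "\<pi> (Gam q) = q" by auto
qed

definition Lf where
  "Lf F = (\<lambda>x y \<phi>. if \<phi> \<in> D x y then (\<lambda>a b \<chi>. \<Sum>i\<in>Bs x y. sP (\<phi> i) (Gam (F x y (dl x y i)) a b \<chi>)) else (\<lambda>a b \<chi>. 0))"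

lemma Lf_HH:
  assumes A: "\<forall>q. q \<in> P0"
  shows "Lf F \<in> HH"
  unfolding homCHomCP_def
proof (intro CollectI allI conjI ballI impI)
  fix x y \<phi>
  show "Lf F x y \<phi> \<in> HC"
  proof (cases "\<phi> \<in> D x y")
    case True
    have "(\<lambda>a b \<chi>. \<Sum>i\<in>Bs x y. sP (\<phi> i) (Gam (F x y (dl x y i)) a b \<chi>)) \<in> HC"
      by (rule HC_sumfun[OF Bs(1)]) (rule HC_smult[OF Gam(1)[OF A]])
    then show ?thesis unfolding Lf_def using True by simp
  qed (simp add: Lf_def)
next
  fix x y \<phi> \<psi> assume a: "\<phi> \<in> D x y" "\<psi> \<in> D x y"
  then show "Lf F x y (\<lambda>g. \<phi> g + \<psi> g) = (\<lambda>a b \<chi>. Lf F x y \<phi> a b \<chi> + Lf F x y \<psi> a b \<chi>)"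
    unfolding Lf_def by (auto simp: D_plus P.scale_left_distrib sum.distrib)
next
  fix x y c \<phi> assume a: "\<phi> \<in> D x y"
  then show "Lf F x y (\<lambda>g. c * \<phi> g) = (\<lambda>a b \<chi>. sP c (Lf F x y \<phi> a b \<chi>))"
    unfolding Lf_def by (auto simp: D_smult P.scale_sum_right)
next
  fix x y \<phi> assume "\<phi> \<notin> D x y"
  then show "Lf F x y \<phi> = (\<lambda>a b \<chi>. 0)" unfolding Lf_def by simp
qed

lemma Lf_pi:
  assumes A: "\<forall>q. q \<in> P0" and F: "F \<in> HC"
  shows "\<pi> (Lf F x y \<phi>) = F x y \<phi>"
proof (cases "\<phi> \<in> D x y")
  case True
  have "\<pi> (Lf F x y \<phi>) = \<pi> (\<lambda>a b \<chi>. \<Sum>i\<in>Bs x y. sP (\<phi> i) (Gam (F x y (dl x y i)) a b \<chi>))"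
    unfolding Lf_def using True by simp
  also have "\<dots> = (\<Sum>i\<in>Bs x y. \<pi> (\<lambda>a b \<chi>. sP (\<phi> i) (Gam (F x y (dl x y i)) a b \<chi>)))"
    by (rule pi_sum[OF Bs(1)]) (rule HC_smult[OF Gam(1)[OF A]])
  also have "\<dots> = (\<Sum>i\<in>Bs x y. sP (\<phi> i) (F x y (dl x y i)))"
    by (rule sum.cong[OF refl]) (simp add: pi_scale[OF Gam(1)[OF A]] Gam(3)[OF A])
  also have "\<dots> = (\<Sum>i\<in>Bs x y. F x y (\<lambda>g. \<phi> i * dl x y i g))"
    by (rule sum.cong[OF refl]) (simp add: HC_scale[OF F dl_D])
  also have "\<dots> = F x y (\<lambda>g. \<Sum>i\<in>Bs x y. \<phi> i * dl x y i g)"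
    by (rule HC_sum[OF F, symmetric]) (simp add: D_smult dl_D)
  also have "\<dots> = F x y \<phi>" using fun_expand[OF True] by simp
  finally show ?thesis .
next
  case False
  then show ?thesis unfolding Lf_def using pi_zero HC_out[OF F False] by simp
qed

lemma Lf_K0:
  assumes A: "\<forall>q. q \<in> P0"
  shows "Lf F x y \<phi> \<in> K0"
  unfolding K0_def
proof (intro CollectI allI impI)
  fix a b \<chi> assume ab: "a = b \<or> prec Hom b a"
  have "Gam q a b \<chi> = 0" for q
  proof -
    have "\<forall>a b \<chi>. (a = b \<or> prec Hom b a) \<longrightarrow> Gam q a b \<chi> = 0" using Gam(2)[OF A, of q] unfolding K0_def by simp
    then show ?thesis using ab by blast
  qed
  then show "Lf F x y \<phi> a b \<chi> = 0" unfolding Lf_def by simp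
qed

lemma Lf_zero:
  assumes "\<And>\<psi>. F x y \<psi> = 0"
  shows "Lf F x y \<phi> = (\<lambda>a b \<chi>. 0)"
  unfolding Lf_def Gam_def using assms by simp

definition ExF where
  "ExF F = (\<lambda>x y \<phi>. if \<phi> \<in> D x y then compR (Lf F) x y \<phi> else 0)"

lemma compR_add: "f \<in> HH \<Longrightarrow> \<phi> \<in> D x y \<Longrightarrow> \<psi> \<in> D x y \<Longrightarrow>
  compR f x y (\<lambda>g. \<phi> g + \<psi> g) = compR f x y \<phi> + compR f x y \<psi>"
  unfolding compR_def psi_add
  by (simp add: HH_add psi_D Bs_in sum.distrib)

lemma compR_scale: "f \<in> HH \<Longrightarrow> \<phi> \<in> D x y \<Longrightarrow>
  compR f x y (\<lambda>g. c * \<phi> g) = sP c (compR f x y \<phi>)"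
  unfolding compR_def psi_scale
  by (simp add: HH_scale psi_D Bs_in P.scale_sum_right)

lemma ExF_HC:
  assumes A: "\<forall>q. q \<in> P0"
  shows "ExF F \<in> HC"
  unfolding homCP_def ExF_def
  using compR_add[OF Lf_HH[OF A]] compR_scale[OF Lf_HH[OF A]]
  by (auto simp: D_plus D_smult)

end



context cs begin

definition Ip where "Ip x y = {w. (w = x \<or> prec Hom x w) \<and> prec Hom w y}"

lemma Ip_fin: "finite (Ip x y)"
proof -
  have "Ip x y \<subseteq> insert x {w. prec Hom x w \<and> prec Hom w y}" unfolding Ip_def by auto
  then show ?thesis using LF2[of x y] by (simp add: finite_subset)
qed

lemma Ip_less:
  assumes "prec Hom x z" "prec Hom z y" "\<not> (x = z \<or> prec Hom z x)"
  shows "card (Ip z y) < card (Ip x y)"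
proof (rule psubset_card_mono[OF Ip_fin])
  have "Ip z y \<subseteq> Ip x y" unfolding Ip_def using prec_trans[OF assms(1)] assms(1) by auto
  moreover have "x \<in> Ip x y" unfolding Ip_def using prec_trans[OF assms(1,2)] by simp
  moreover have "x \<notin> Ip z y" unfolding Ip_def using assms(3) by simp
  ultimately show "Ip z y \<subset> Ip x y" by auto
qed

definition vanish where "vanish n F \<longleftrightarrow> (\<forall>x y \<phi>. card (Ip x y) < n \<longrightarrow> F x y \<phi> = 0)"

lemma ExF_vanish:
  assumes A: "\<forall>q. q \<in> P0" and v: "vanish n F"
  shows "vanish (Suc n) (ExF F)"
  unfolding vanish_def
proof (intro allI impI)
  fix x y \<phi> assume c: "card (Ip x y) < Suc n"
  show "ExF F x y \<phi> = 0"
  proof (cases "\<phi> \<in> D x y")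
    case True
    have "compR (Lf F) x y \<phi> = 0" unfolding compR_def
    proof (intro sum.neutral ballI)
      fix z i assume z: "z \<in> Zs x y" and i: "i \<in> Bs x z"
      have pxz: "prec Hom x z" and pzy: "prec Hom z y" using z unfolding Zs_def using prec_hom' by auto
      show "Lf F z y (psi \<phi> x y z i) x z (dl x z i) = 0"
      proof (cases "x = z \<or> prec Hom z x")
        case True
        moreover have "\<forall>a b \<chi>. (a = b \<or> prec Hom b a) \<longrightarrow> Lf F z y (psi \<phi> x y z i) a b \<chi> = 0"
          using Lf_K0[OF A, of F z y "psi \<phi> x y z i"] unfolding K0_def by simp
        ultimately show ?thesis by blast
      next
        case False
        have "card (Ip z y) < n" using Ip_less[OF pxz pzy False] c by simp
        then have "\<And>\<psi>. F z y \<psi> = 0" using v unfolding vanish_def by simp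
        then show ?thesis using Lf_zero[of F z y] by simp
      qed
    qed
    then show ?thesis unfolding ExF_def by simp
  qed (simp add: ExF_def)
qed

definition Fs where "Fs p n = (ExF ^^ n) (Gam p)"

lemma Fs_Suc: "Fs p (Suc n) = ExF (Fs p n)"
  unfolding Fs_def by simp

lemma Fs_HC: assumes A: "\<forall>q. q \<in> P0" shows "Fs p n \<in> HC"
  by (induction n) (auto simp: Fs_def Gam[OF A] ExF_HC[OF A])

lemma Fs_vanish: assumes A: "\<forall>q. q \<in> P0" shows "vanish n (Fs p n)"
proof (induction n)
  case 0 then show ?case unfolding vanish_def by simp
next
  case (Suc n) then show ?case unfolding Fs_Suc by (rule ExF_vanish[OF A])
qed

lemma Fs_zero: assumes A: "\<forall>q. q \<in> P0" shows "card (Ip x y) < n \<Longrightarrow> Fs p n x y \<phi> = 0"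
  using Fs_vanish[OF A, of n p] unfolding vanish_def by simp

end



context cs begin

lemma nakayama:
  assumes A: "\<forall>q. q \<in> P0"
  shows "(p::'p) = 0"
proof -
  define N where "N x y = card (Ip x y)" for x y
  define T where "T = (\<lambda>x y \<phi>. \<Sum>n\<le>N x y. Fs p n x y \<phi>)"
  define g where "g = (\<lambda>x y \<phi>. (\<lambda>a b \<chi>. \<Sum>n\<le>N x y. Lf (Fs p n) x y \<phi> a b \<chi>))"
  define G where "G = (\<lambda>x y \<phi>. T x y \<phi> - Fs p 0 x y \<phi>)"
  have FsHC: "Fs p n \<in> HC" for n using Fs_HC[OF A] .
  have LfHH: "Lf F \<in> HH" for F using Lf_HH[OF A] .
  have T_HC: "T \<in> HC" unfolding T_def by (rule HC_sumfun'[OF FsHC]) simp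
  have G_HC: "G \<in> HC" unfolding G_def using HC_diff[OF T_HC FsHC] .
  have T_ext: "(\<Sum>n\<le>M. Fs p n x y \<phi>) = T x y \<phi>" if "N x y \<le> M" for x y \<phi> M
    unfolding T_def
  proof (rule sum.mono_neutral_right)
    show "finite {..M}" by simp
    show "{..N x y} \<subseteq> {..M}" using that by auto
    show "\<forall>i\<in>{..M} - {..N x y}. Fs p i x y \<phi> = 0"
      using Fs_zero[OF A] unfolding N_def by auto
  qed
  have Lf_ext: "(\<Sum>n\<le>M. Lf (Fs p n) x y \<phi> a b \<chi>) = g x y \<phi> a b \<chi>" if "N x y \<le> M" for x y \<phi> M a b \<chi>
    unfolding g_def
  proof (rule sum.mono_neutral_right)
    show "finite {..M}" by simp
    show "{..N x y} \<subseteq> {..M}" using that by auto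
    show "\<forall>i\<in>{..M} - {..N x y}. Lf (Fs p i) x y \<phi> a b \<chi> = 0"
    proof
      fix i assume "i \<in> {..M} - {..N x y}"
      then have "card (Ip x y) < i" unfolding N_def by auto
      then have "\<And>\<psi>. Fs p i x y \<psi> = 0" using Fs_zero[OF A] by blast
      then show "Lf (Fs p i) x y \<phi> a b \<chi> = 0" using Lf_zero[of "Fs p i" x y \<phi>] by simp
    qed
  qed
  have g_HH: "g \<in> HH" unfolding homCHomCP_def
  proof (intro CollectI allI conjI ballI impI)
    fix x y \<phi> show "g x y \<phi> \<in> HC"
      unfolding g_def by (rule HC_sumfun) (auto intro: HH_in[OF LfHH])
  next
    fix x y \<phi> \<psi> assume a: "\<phi> \<in> D x y" "\<psi> \<in> D x y"
    show "g x y (\<lambda>g. \<phi> g + \<psi> g) = (\<lambda>a b \<chi>. g x y \<phi> a b \<chi> + g x y \<psi> a b \<chi>)"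
      unfolding g_def using a by (simp add: HH_add[OF LfHH] sum.distrib)
  next
    fix x y c \<phi> assume a: "\<phi> \<in> D x y"
    show "g x y (\<lambda>g. c * \<phi> g) = (\<lambda>a b \<chi>. sP c (g x y \<phi> a b \<chi>))"
      unfolding g_def using a by (simp add: HH_scale[OF LfHH] P.scale_sum_right)
  next
    fix x y \<phi> assume "\<phi> \<notin> D x y"
    then show "g x y \<phi> = (\<lambda>a b \<chi>. 0)" unfolding g_def Lf_def by simp
  qed
  have pig: "(\<lambda>x y \<phi>. \<pi> (g x y \<phi>)) = T"
  proof (intro ext)
    fix x y \<phi>
    have "\<pi> (g x y \<phi>) = (\<Sum>n\<le>N x y. \<pi> (Lf (Fs p n) x y \<phi>))"
      unfolding g_def by (rule pi_sum) (auto intro: HH_in[OF LfHH])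
    also have "\<dots> = T x y \<phi>" unfolding T_def using Lf_pi[OF A FsHC] by simp
    finally show "\<pi> (g x y \<phi>) = T x y \<phi>" .
  qed
  have "\<pi> (\<lambda>x y \<phi>. \<pi> (g x y \<phi>)) = \<pi> G"
  proof (rule contra[OF g_HH])
    fix x y \<phi> assume "\<phi> \<notin> D x y"
    then show "G x y \<phi> = 0" unfolding G_def T_def by (simp add: HC_out[OF FsHC])
  next
    fix x y \<phi> R assume phi: "\<phi> \<in> D x y" and R: "comult_rep sM Hom cmp x y \<phi> R"
    define M where "M = N x y + (\<Sum>z\<in>Zs x y. N z y)"
    have MZ: "N z y \<le> M" if "z \<in> Zs x y" for z
    proof -
      have "N z y \<le> (\<Sum>z\<in>Zs x y. N z y)" by (rule member_le_sum) (use that Zs_fin in auto)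
      then show ?thesis unfolding M_def by simp
    qed
    have "(\<Sum>(z, \<phi>1, \<phi>2) \<leftarrow> R. g z y \<phi>2 x z \<phi>1) = compR g x y \<phi>" by (rule Rsum_gen[OF g_HH phi R])
    also have "\<dots> = (\<Sum>z\<in>Zs x y. \<Sum>i\<in>Bs x z. \<Sum>n\<le>M. Lf (Fs p n) z y (psi \<phi> x y z i) x z (dl x z i))"
      unfolding compR_def
      by (rule sum.cong[OF refl], rule sum.cong[OF refl]) (simp add: Lf_ext[OF MZ])
    also have "\<dots> = (\<Sum>z\<in>Zs x y. \<Sum>n\<le>M. \<Sum>i\<in>Bs x z. Lf (Fs p n) z y (psi \<phi> x y z i) x z (dl x z i))"
      by (rule sum.cong[OF refl]) (rule sum.swap)
    also have "\<dots> = (\<Sum>n\<le>M. \<Sum>z\<in>Zs x y. \<Sum>i\<in>Bs x z. Lf (Fs p n) z y (psi \<phi> x y z i) x z (dl x z i))"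
      by (rule sum.swap)
    also have "\<dots> = (\<Sum>n\<le>M. Fs p (Suc n) x y \<phi>)"
      by (simp add: Fs_Suc ExF_def phi compR_def)
    also have "\<dots> = (\<Sum>n\<le>Suc M. Fs p n x y \<phi>) - Fs p 0 x y \<phi>"
      unfolding sum.atMost_Suc_shift by simp
    also have "\<dots> = G x y \<phi>" using T_ext[of x y "Suc M" \<phi>] unfolding G_def M_def by simp
    finally show "G x y \<phi> = (\<Sum>(z, \<phi>1, \<phi>2) \<leftarrow> R. g z y \<phi>2 x z \<phi>1)" by simp
  qed
  then have e1: "\<pi> T = \<pi> G" using pig by simp
  have "T = (\<lambda>x y \<phi>. G x y \<phi> + Fs p 0 x y \<phi>)" unfolding G_def by simp
  then have "\<pi> T = \<pi> G + \<pi> (Fs p 0)" using pi_add[OF G_HC FsHC] by simp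
  with e1 have "\<pi> (Fs p 0) = 0" by simp
  moreover have "\<pi> (Fs p 0) = p" unfolding Fs_def using Gam(3)[OF A] by simp
  ultimately show "p = 0" by simp
qed

end

theorem lemma4p11:
  fixes sM :: "'k::field \<Rightarrow> 'm::ab_group_add \<Rightarrow> 'm"
    and Hom :: "'o \<Rightarrow> 'o \<Rightarrow> 'm set"
    and cmp :: "'o \<Rightarrow> 'o \<Rightarrow> 'o \<Rightarrow> 'm \<Rightarrow> 'm \<Rightarrow> 'm"
    and idn :: "'o \<Rightarrow> 'm"
    and sP :: "'k \<Rightarrow> 'p::ab_group_add \<Rightarrow> 'p"
    and \<pi> :: "('o \<Rightarrow> 'o \<Rightarrow> ('m \<Rightarrow> 'k) \<Rightarrow> 'p) \<Rightarrow> 'p"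
  assumes "klinear_category sM Hom cmp idn"
    and "locally_finite sM Hom"
    and "contramodule sM Hom cmp idn sP \<pi>"
    and "\<exists>p::'p. p \<noteq> 0"
  shows "\<exists>Q. big_submodule Hom sP (Theta_sp sM Hom idn sP \<pi>) (Theta_act sM Hom sP \<pi>) Q \<and>
             (\<exists>x. Q x \<noteq> Theta_sp sM Hom idn sP \<pi> x)"
proof -
  interpret C: cs sM Hom cmp idn sP \<pi>
    by (rule cs.intro) (fact assms(1), fact assms(2), fact assms(3))
  have "\<exists>p. p \<notin> C.P0"
  proof (rule ccontr)
    assume "\<not> (\<exists>p. p \<notin> C.P0)"
    then have "\<forall>q. q \<in> C.P0" by simp
    then have z: "p = 0" for p :: 'p by (rule C.nakayama)
    then show False using assms(4) by blast
  qed
  then show ?thesis by (rule C.main_from_P0)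
qed


end
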